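(* For every fermionic state $\rho$ of a system $\mathsf{L}_\mathsf{F}$ of $L$ local fermionic modes there exists a pure state $\Psi_\rho$ of some composite system $\mathsf{L}_\mathsf{F}\mathsf{M}_\mathsf{F}$ with $\operatorname{Tr}^f_{\mathsf{M}_\mathsf{F}}\Psi_\rho=\rho$ (a purification). Moreover, if $\Psi_\rho$ is a pure state of $\mathsf{L}_\mathsf{F}\mathsf{M}_\mathsf{F}$ and $\Phi_\rho$ is a pure state of $\mathsf{L}_\mathsf{F}\mathsf{K}_\mathsf{F}$, both purifications of $\rho$, then there exists a fermionic channel $\mathcal{V}$ from $\mathsf{M}_\mathsf{F}$ to $\mathsf{K}_\mathsf{F}$ such that $(\mathcal{I}_{\mathsf{L}_\mathsf{F}}\boxtimes\mathcal{V})(\Psi_\rho)=\Phi_\rho$.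
   Context: A system $\mathsf{L}_\mathsf{F}$ of $L$ local fermionic modes (LFMs) is described by field operators $\varphi_1,\dots,\varphi_L$ with $\{\varphi_i,\varphi_j^\dagger\}=\delta_{ij}I$, $\{\varphi_i,\varphi_j\}=0$. The vacuum $|\Omega\rangle$ is the common $0$-eigenvector of all $\varphi_i^\dagger\varphi_i$; the Fock basis $|n_1,\dots,n_L\rangle=(\varphi_1^\dagger)^{n_1}\cdots(\varphi_L^\dagger)^{n_L}|\Omega\rangle$ spans the Fock space. Identifying it with the computational basis of $L$ qubits gives the Jordan–Wigner isomorphism $J$ (depending on an ordering of the modes): $J(\varphi_i)=(\bigotimes_{l<i}\sigma^z_l)\otimes\sigma^-_i\otimes(\bigotimes_{k>i}I_k)$, extended linearly and multiplicatively with $J(X^\dagger)=J(X)^\dagger$. The Fock space splits into even and odd total occupation number subspaces. Fermionic states: linear combinations of products of an even number of field operators with $J(\rho)=\rho_e+\rho_o$, $\rho_e,\rho_o\geq0$ supported on the even/odd subspaces, trace $\le 1$; pure states are those with rank-one representative. $\mathsf{L}_\mathsf{F}\mathsf{M}_\mathsf{F}$ (also written $\mathsf{L}_\mathsf{F}\boxtimes\mathsf{M}_\mathsf{F}$) is the system of $L+M$ LFMs. The fermionic partial trace $\operatorname{Tr}^f_{\mathsf{M}_\mathsf{F}}$ drops every term containing an odd number of field operators of some mode of $\mathsf{M}_\mathsf{F}$ and removes the $\mathsf{M}_\mathsf{F}$ field operators from the remaining terms. Fermionic transformations are completely positive maps (in the Jordan–Wigner representation) whose Kraus operators are each linear combinations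 of products of field operators with all an even or all an odd number of factors; channels are trace-preserving transformations. $\mathcal{C}\boxtimes\mathcal{D}$ denotes parallel composition (Kraus operators $\{C_iD_j\}$), and $\mathcal{I}_{\mathsf{L}_\mathsf{F}}$ the identity channel on $\mathsf{L}_\mathsf{F}$. *)

theory Defs
  imports Complex_Main "Jordan_Normal_Form.Matrix"
begin

text \<open>Jordan-Wigner representation. A system of N local fermionic modes is represented on
  N qubits, i.e. on complex 2^N x 2^N matrices. Basis index i < 2^N encodes the occupation
  numbers (n_1,...,n_N) in binary with n_1 the most significant bit, so that for the composite
  system of L+M modes (modes of the first system ordered first) the index is i_L * 2^M + i_M.\<close>

definition bitcount :: "nat \<Rightarrow> nat" where
  "bitcount n = (\<Sum>k<n. if bit n k then 1 else 0)"

definition even_occ :: "nat \<Rightarrow> bool" where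
  "even_occ i \<longleftrightarrow> even (bitcount i)"

definition psd :: "nat \<Rightarrow> complex mat \<Rightarrow> bool" where
  "psd n A \<longleftrightarrow> A \<in> carrier_mat n n \<and>
     (\<forall>v. dim_vec v = n \<longrightarrow> (let q = (\<Sum>i<n. cnj (v $ i) * (A *\<^sub>v v) $ i) in Im q = 0 \<and> Re q \<ge> 0))"

definition supported_on :: "nat \<Rightarrow> bool \<Rightarrow> complex mat \<Rightarrow> bool" where
  "supported_on n par A \<longleftrightarrow>
     (\<forall>i<n. \<forall>j<n. (even_occ i \<noteq> par \<or> even_occ j \<noteq> par) \<longrightarrow> A $$ (i, j) = 0)"

definition fstate :: "nat \<Rightarrow> complex mat \<Rightarrow> bool" where
  "fstate N \<rho> \<longleftrightarrow> \<rho> \<in> carrier_mat (2^N) (2^N) \<and>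
     (\<exists>\<rho>e \<rho>o. \<rho> = \<rho>e + \<rho>o \<and> psd (2^N) \<rho>e \<and> psd (2^N) \<rho>o \<and>
        supported_on (2^N) True \<rho>e \<and> supported_on (2^N) False \<rho>o) \<and>
     Re (\<Sum>i<2^N. \<rho> $$ (i, i)) \<le> 1"

definition outer :: "complex vec \<Rightarrow> complex mat" where
  "outer v = mat (dim_vec v) (dim_vec v) (\<lambda>(i, j). v $ i * cnj (v $ j))"

definition fpure :: "nat \<Rightarrow> complex mat \<Rightarrow> bool" where
  "fpure N \<Psi> \<longleftrightarrow> fstate N \<Psi> \<and>
     (\<exists>v. dim_vec v = 2^N \<and> v \<noteq> 0\<^sub>v (2^N) \<and> \<Psi> = outer v)"

text \<open>Fermionic partial trace over the modes of M_F in the system L_F M_F (Jordan-Wigner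
  representation, M_F modes ordered after the L_F modes): trace out the last M qubits.\<close>
definition fptrace :: "nat \<Rightarrow> nat \<Rightarrow> complex mat \<Rightarrow> complex mat" where
  "fptrace L M X = mat (2^L) (2^L) (\<lambda>(i, j). \<Sum>k<2^M. X $$ (i * 2^M + k, j * 2^M + k))"

definition kron :: "complex mat \<Rightarrow> complex mat \<Rightarrow> complex mat" where
  "kron A B = mat (dim_row A * dim_row B) (dim_col A * dim_col B)
     (\<lambda>(i, j). A $$ (i div dim_row B, j div dim_col B) * B $$ (i mod dim_row B, j mod dim_col B))"

definition cadj :: "complex mat \<Rightarrow> complex mat" where
  "cadj A = mat (dim_col A) (dim_row A) (\<lambda>(i, j). cnj (A $$ (j, i)))"

definition parity_op :: "nat \<Rightarrow> complex mat" where
  "parity_op N = mat (2^N) (2^N) (\<lambda>(i, j). if i = j then (if even_occ i then 1 else -1) else 0)"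

text \<open>Kraus operator from M modes to K modes that is a combination of products of an even
  (resp. odd) number of field operators: it preserves (resp. flips) the occupation parity.\<close>
definition even_kraus :: "nat \<Rightarrow> nat \<Rightarrow> complex mat \<Rightarrow> bool" where
  "even_kraus M K D \<longleftrightarrow> D \<in> carrier_mat (2^K) (2^M) \<and>
     (\<forall>i<2^K. \<forall>j<2^M. even_occ i \<noteq> even_occ j \<longrightarrow> D $$ (i, j) = 0)"

definition odd_kraus :: "nat \<Rightarrow> nat \<Rightarrow> complex mat \<Rightarrow> bool" where
  "odd_kraus M K D \<longleftrightarrow> D \<in> carrier_mat (2^K) (2^M) \<and>
     (\<forall>i<2^K. \<forall>j<2^M. even_occ i = even_occ j \<longrightarrow> D $$ (i, j) = 0)"

definition fchannel :: "nat \<Rightarrow> nat \<Rightarrow> complex mat list \<Rightarrow> bool" where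
  "fchannel M K Ks \<longleftrightarrow> (\<forall>D\<in>set Ks. even_kraus M K D \<or> odd_kraus M K D) \<and>
     foldr (+) (map (\<lambda>D. cadj D * D) Ks) (0\<^sub>m (2^M) (2^M)) = 1\<^sub>m (2^M)"

definition apply_kraus :: "nat \<Rightarrow> complex mat list \<Rightarrow> complex mat \<Rightarrow> complex mat" where
  "apply_kraus n Ks X = foldr (+) (map (\<lambda>D. D * X * cadj D) Ks) (0\<^sub>m n n)"

text \<open>Kraus operators of the parallel composition I_{L_F} \<boxtimes> V for V from M_F to K_F, in
  the Jordan-Wigner representation of L_F M_F and L_F K_F: an odd operator of the later modes
  picks up the sigma^z string (parity operator) on the L_F modes.\<close>
definition id_par :: "nat \<Rightarrow> nat \<Rightarrow> nat \<Rightarrow> complex mat list \<Rightarrow> complex mat list" where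
  "id_par L M K Ks = map (\<lambda>D. kron (if even_kraus M K D then 1\<^sub>m (2^L) else parity_op L) D) Ks"

end

theory Submission imports Defs "Jordan_Normal_Form.Determinant" begin

definition ev :: "nat \<Rightarrow> nat \<Rightarrow> complex" where
  "ev p = (\<lambda>i. if i = p then 1 else 0)"

definition bf :: "nat \<Rightarrow> (nat \<Rightarrow> nat \<Rightarrow> complex) \<Rightarrow> (nat \<Rightarrow> complex) \<Rightarrow> (nat \<Rightarrow> complex) \<Rightarrow> complex" where
  "bf n G x y = (\<Sum>i<n. \<Sum>j<n. cnj (x i) * G i j * y j)"

definition qpsd :: "nat \<Rightarrow> (nat \<Rightarrow> nat \<Rightarrow> complex) \<Rightarrow> bool" where
  "qpsd n G \<longleftrightarrow> (\<forall>x. Im (bf n G x x) = 0 \<and> 0 \<le> Re (bf n G x x))"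

definition herm :: "nat \<Rightarrow> (nat \<Rightarrow> nat \<Rightarrow> complex) \<Rightarrow> bool" where
  "herm n G \<longleftrightarrow> (\<forall>i<n. \<forall>j<n. G j i = cnj (G i j))"

definition bd :: "(nat \<Rightarrow> bool) \<Rightarrow> nat \<Rightarrow> (nat \<Rightarrow> nat \<Rightarrow> complex) \<Rightarrow> bool" where
  "bd \<pi> n G \<longleftrightarrow> (\<forall>i<n. \<forall>j<n. \<pi> i \<noteq> \<pi> j \<longrightarrow> G i j = 0)"

lemma bf_add1: "bf n G (\<lambda>i. x i + y i) z = bf n G x z + bf n G y z"
  by (simp add: bf_def algebra_simps sum.distrib)
lemma bf_add2: "bf n G z (\<lambda>i. x i + y i) = bf n G z x + bf n G z y"
  by (simp add: bf_def algebra_simps sum.distrib)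
lemma bf_scale1: "bf n G (\<lambda>i. c * x i) z = cnj c * bf n G x z"
  by (simp add: bf_def algebra_simps sum_distrib_left)
lemma bf_scale2: "bf n G z (\<lambda>i. c * x i) = c * bf n G z x"
  by (simp add: bf_def algebra_simps sum_distrib_left)

lemma bf_expand: "bf n G (\<lambda>k. x k + c * y k) (\<lambda>k. x k + c * y k)
  = bf n G x x + c * bf n G x y + cnj c * bf n G y x + cnj c * c * bf n G y y"
  by (simp add: bf_add1 bf_add2 bf_scale1 bf_scale2 algebra_simps)

lemma bf_ev1: assumes "p < n" shows "bf n G (ev p) z = (\<Sum>j<n. G p j * z j)"
proof -
  have "\<And>i. (\<Sum>j<n. cnj (ev p i) * G i j * z j) = (if i = p then (\<Sum>j<n. G p j * z j) else 0)"
    by (simp add: ev_def)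
  then show ?thesis using assms by (simp add: bf_def)
qed
lemma bf_ev2: assumes "p < n" shows "bf n G z (ev p) = (\<Sum>i<n. cnj (z i) * G i p)"
proof -
  have "\<And>i. (\<Sum>j<n. cnj (z i) * G i j * ev p j) = cnj (z i) * G i p"
    using assms by (simp add: ev_def if_distrib cong: if_cong)
  then show ?thesis by (simp add: bf_def)
qed
lemma bf_ev: assumes "a < n" "b < n" shows "bf n G (ev a) (ev b) = G a b"
proof -
  have "(\<Sum>j<n. G a j * ev b j) = G a b" using assms(2) by (simp add: ev_def if_distrib cong: if_cong)
  then show ?thesis using bf_ev1[OF assms(1)] by simp
qed

lemma hermD: "herm n G \<Longrightarrow> i < n \<Longrightarrow> j < n \<Longrightarrow> G j i = cnj (G i j)"
  unfolding herm_def by blast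

lemma herm_of_qpsd: assumes "qpsd n G" shows "herm n G"
  unfolding herm_def
proof (intro allI impI)
  fix i j assume ij: "i < n" "j < n"
  have q: "\<And>x. Im (bf n G x x) = 0" using assms by (auto simp: qpsd_def)
  have ii: "Im (G i i) = 0" using q[of "ev i"] bf_ev[OF ij(1) ij(1)] by simp
  have jj: "Im (G j j) = 0" using q[of "ev j"] bf_ev[OF ij(2) ij(2)] by simp
  have e1: "Im (G i i + G i j + G j i + G j j) = 0"
    using q[of "\<lambda>k. ev i k + 1 * ev j k"] unfolding bf_expand
    by (simp add: bf_ev ij)
  have e2: "Im (G i i + \<i> * G i j - \<i> * G j i + G j j) = 0"
    using q[of "\<lambda>k. ev i k + \<i> * ev j k"] unfolding bf_expand
    by (simp add: bf_ev ij)
  show "G j i = cnj (G i j)"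
    using e1 e2 ii jj by (simp add: complex_eq_iff)
qed


lemma qpsdD: "qpsd n G \<Longrightarrow> Im (bf n G x x) = 0" "qpsd n G \<Longrightarrow> 0 \<le> Re (bf n G x x)"
  by (auto simp: qpsd_def)

lemma psd_zero_row: assumes "qpsd n G" "p < n" "j < n" "G p p = 0" shows "G p j = 0"
proof (rule ccontr)
  let ?b = "G p j"
  assume b: "?b \<noteq> 0"
  have h: "G j p = cnj ?b" using hermD[OF herm_of_qpsd[OF assms(1)] assms(2,3)] .
  define t where "t = (Re (G j j) + 1) / (2 * (cmod ?b)^2)"
  define c where "c = - (complex_of_real t * ?b)"
  have "0 \<le> Re (bf n G (\<lambda>k. ev j k + c * ev p k) (\<lambda>k. ev j k + c * ev p k))"
    using qpsdD(2)[OF assms(1)] .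
  also have "bf n G (\<lambda>k. ev j k + c * ev p k) (\<lambda>k. ev j k + c * ev p k)
     = G j j + c * cnj ?b + cnj c * ?b"
    unfolding bf_expand bf_ev[OF assms(3) assms(3)] bf_ev[OF assms(3) assms(2)]
      bf_ev[OF assms(2) assms(3)] bf_ev[OF assms(2) assms(2)] h assms(4) by simp
  also have "Re (G j j + c * cnj ?b + cnj c * ?b) = Re (G j j) - 2 * t * (cmod ?b)^2"
    unfolding c_def cmod_power2 by (simp add: algebra_simps power2_eq_square)
  also have "\<dots> = -1" using b by (simp add: t_def field_simps)
  finally show False by simp
qed

lemma schur_qpsd: assumes "qpsd n G" "p < n" "G p p \<noteq> 0"
  shows "qpsd n (\<lambda>i j. G i j - G i p * G p j / G p p)"
proof -
  have H: "herm n G" using herm_of_qpsd[OF assms(1)] .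
  have gr: "cnj (G p p) = G p p" using hermD[OF H assms(2) assms(2)] by simp
  have key: "bf n (\<lambda>i j. G i j - G i p * G p j / G p p) x x
     = bf n G (\<lambda>k. x k + (- ((\<Sum>j<n. G p j * x j) / G p p)) * ev p k)
                (\<lambda>k. x k + (- ((\<Sum>j<n. G p j * x j) / G p p)) * ev p k)" for x
  proof -
    define \<beta> where "\<beta> = (\<Sum>j<n. G p j * x j)"
    have b2: "bf n G x (ev p) = cnj \<beta>"
      unfolding bf_ev2[OF assms(2)] \<beta>_def using hermD[OF H _ assms(2)]
      by (auto simp: mult.commute intro!: sum.cong)
    have b1: "bf n G (ev p) x = \<beta>" unfolding bf_ev1[OF assms(2)] \<beta>_def ..
    have rhs: "bf n G (\<lambda>k. x k + (- (\<beta> / G p p)) * ev p k) (\<lambda>k. x k + (- (\<beta> / G p p)) * ev p k)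
       = bf n G x x - cnj \<beta> * \<beta> / G p p"
      unfolding bf_expand b1 b2 bf_ev[OF assms(2) assms(2)] using assms(3) gr
      by (simp add: field_simps)
    have "bf n (\<lambda>i j. G i j - G i p * G p j / G p p) x x
       = bf n G x x - (\<Sum>i<n. \<Sum>j<n. cnj (x i) * G i p * (G p j * x j)) / G p p"
      by (simp add: bf_def algebra_simps sum_subtractf sum_divide_distrib)
    also have "(\<Sum>i<n. \<Sum>j<n. cnj (x i) * G i p * (G p j * x j)) = cnj \<beta> * \<beta>"
    proof -
      have "(\<Sum>i<n. \<Sum>j<n. cnj (x i) * G i p * (G p j * x j)) = (\<Sum>i<n. cnj (x i) * G i p) * \<beta>"
        unfolding \<beta>_def sum_product ..
      then show ?thesis using b2 unfolding bf_ev2[OF assms(2)] by simp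
    qed
    finally show ?thesis using rhs \<beta>_def by simp
  qed
  show ?thesis unfolding qpsd_def key using assms(1) by (simp add: qpsd_def)
qed

lemma sum_sq_zero:
  fixes n :: nat
  assumes "(\<Sum>s<n. z s * cnj (z s)) = 0" "p < n" shows "z p = 0"
proof -
  have "(\<Sum>s<n. z s * cnj (z s)) = complex_of_real (\<Sum>s<n. (cmod (z s))^2)"
    unfolding of_real_sum complex_norm_square ..
  then have "(\<Sum>s<n. (cmod (z s))^2) = 0" using assms(1) by (metis of_real_eq_0_iff)
  then have "\<forall>s\<in>{..<n}. (cmod (z s))^2 = 0" using sum_nonneg_eq_0_iff[of "{..<n}" "\<lambda>s. (cmod (z s))^2"] by auto
  then show ?thesis using assms(2) by simp
qed

lemma chol_aux:
  assumes "qpsd n G" "bd \<pi> n G" "\<forall>i<n. \<forall>j<n. (i < n - d \<or> j < n - d) \<longrightarrow> G i j = 0"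
  shows "\<exists>u. (\<forall>i<n. \<forall>j<n. G i j = (\<Sum>s<n. u s i * cnj (u s j))) \<and>
     (\<forall>s i. u s i \<noteq> 0 \<longrightarrow> s \<le> i \<and> i < n \<and> \<pi> i = \<pi> s \<and> u s s \<noteq> 0)"
  using assms
proof (induction d arbitrary: G)
  case 0
  then show ?case by (intro exI[of _ "\<lambda>s i. 0"]) auto
next
  case (Suc d)
  show ?case
  proof (cases "n \<le> d")
    case True
    then have "n - Suc d = n - d" by simp
    then have "\<forall>i<n. \<forall>j<n. (i < n - d \<or> j < n - d) \<longrightarrow> G i j = 0" using Suc.prems(3) by simp
    then show ?thesis using Suc.IH[OF Suc.prems(1,2)] by blast
  next
    case False
    define p where "p = n - Suc d"
    have pn: "p < n" and nd: "n - d = Suc p" using False by (auto simp: p_def)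
    have H: "herm n G" using herm_of_qpsd[OF Suc.prems(1)] .
    have z0: "G i j = 0" if "i < n" "j < n" "i < p \<or> j < p" for i j
      using Suc.prems(3) that by (auto simp: p_def)
    show ?thesis
    proof (cases "G p p = 0")
      case True
      have "\<forall>i<n. \<forall>j<n. (i < n - d \<or> j < n - d) \<longrightarrow> G i j = 0"
      proof (intro allI impI)
        fix i j assume ij: "i < n" "j < n" "i < n - d \<or> j < n - d"
        show "G i j = 0"
        proof (cases "i < p \<or> j < p")
          case True then show ?thesis using z0 ij by auto
        next
          case False
          then have "i = p \<or> j = p" using ij nd by auto
          then show ?thesis
          proof
            assume "i = p" then show ?thesis using psd_zero_row[OF Suc.prems(1) pn ij(2) True] by simp
          next
            assume "j = p" then show ?thesis
              using psd_zero_row[OF Suc.prems(1) pn ij(1) True] hermD[OF H pn ij(1)] by simp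
          qed
        qed
      qed
      then show ?thesis using Suc.IH Suc.prems(1,2) by blast
    next
      case False
      define G' where "G' = (\<lambda>i j. G i j - G i p * G p j / G p p)"
      have q: "Im (G p p) = 0" "0 \<le> Re (G p p)"
        using qpsdD[OF Suc.prems(1), of "ev p"] bf_ev[OF pn pn] by auto
      have gpos: "0 < Re (G p p)" using q False by (metis complex_eq_iff order_le_less zero_complex.simps)
      define r where "r = sqrt (Re (G p p))"
      have rr': "r * r = Re (G p p)" using gpos unfolding r_def by simp
      have rr: "complex_of_real r * complex_of_real r = G p p"
        unfolding of_real_mult[symmetric] rr' using q by (simp add: complex_eq_iff)
      have r0: "r \<noteq> 0" using gpos by (simp add: r_def)
      define w where "w = (\<lambda>i. if i < n then G i p / complex_of_real r else 0)"
      have ww: "w i * cnj (w j) = G i p * G p j / G p p" if "i < n" "j < n" for i j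
      proof -
        have "cnj (G j p) = G p j" using hermD[OF H that(2) pn] by simp
        moreover have "w i * cnj (w j) = G i p * cnj (G j p) / (complex_of_real r * complex_of_real r)"
          using that by (simp add: w_def)
        ultimately show ?thesis using rr by simp
      qed
      have qG': "qpsd n G'" unfolding G'_def using schur_qpsd[OF Suc.prems(1) pn False] .
      have bG': "bd \<pi> n G'"
      proof (unfold bd_def, intro allI impI)
        fix i j assume ij: "i < n" "j < n" "\<pi> i \<noteq> \<pi> j"
        have g: "G a b = 0" if "a < n" "b < n" "\<pi> a \<noteq> \<pi> b" for a b
          using Suc.prems(2) that unfolding bd_def by blast
        show "G' i j = 0"
        proof (cases "\<pi> i = \<pi> p")
          case True then show ?thesis using g[of i j] g[of p j] ij pn by (simp add: G'_def)
        next
          case False then show ?thesis using g[of i j] g[of i p] ij pn by (simp add: G'_def)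
        qed
      qed
      have zG': "\<forall>i<n. \<forall>j<n. (i < n - d \<or> j < n - d) \<longrightarrow> G' i j = 0"
      proof (intro allI impI)
        fix i j assume ij: "i < n" "j < n" "i < n - d \<or> j < n - d"
        then consider "i < p" | "i = p" | "j < p" | "j = p" using nd by linarith
        then show "G' i j = 0"
        proof cases
          case 1 then show ?thesis using z0[of i j] z0[of i p] ij pn by (simp add: G'_def)
        next
          case 2 then show ?thesis using False by (simp add: G'_def)
        next
          case 3 then show ?thesis using z0[of i j] z0[of p j] ij pn by (simp add: G'_def)
        next
          case 4 then show ?thesis using False by (simp add: G'_def)
        qed
      qed
      obtain u' where u'1: "\<forall>i<n. \<forall>j<n. G' i j = (\<Sum>s<n. u' s i * cnj (u' s j))"
        and u'2: "\<forall>s i. u' s i \<noteq> 0 \<longrightarrow> s \<le> i \<and> i < n \<and> \<pi> i = \<pi> s \<and> u' s s \<noteq> 0"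
        using Suc.IH[OF qG' bG' zG'] by blast
      have "G' p p = 0" using False by (simp add: G'_def)
      then have "u' p p = 0" using u'1 pn sum_sq_zero[of "\<lambda>s. u' s p" n p] by simp
      then have up: "u' p i = 0" for i using u'2 by blast
      define u where "u = u'(p := w)"
      have A: "\<forall>i<n. \<forall>j<n. G i j = (\<Sum>s<n. u s i * cnj (u s j))"
      proof (intro allI impI)
        fix i j assume ij: "i < n" "j < n"
        have e: "u s i * cnj (u s j) = u' s i * cnj (u' s j) + (if s = p then w i * cnj (w j) else 0)" for s
          by (simp add: u_def up)
        have "(\<Sum>s<n. u s i * cnj (u s j)) = G' i j + w i * cnj (w j)"
          unfolding e sum.distrib using u'1 ij pn by simp
        then show "G i j = (\<Sum>s<n. u s i * cnj (u s j))" using ww[OF ij] by (simp add: G'_def)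
      qed
      have B: "\<forall>s i. u s i \<noteq> 0 \<longrightarrow> s \<le> i \<and> i < n \<and> \<pi> i = \<pi> s \<and> u s s \<noteq> 0"
      proof (intro allI impI)
        fix s i assume "u s i \<noteq> 0"
        then show "s \<le> i \<and> i < n \<and> \<pi> i = \<pi> s \<and> u s s \<noteq> 0"
        proof (cases "s = p")
          case True
          with \<open>u s i \<noteq> 0\<close> have wi: "w i \<noteq> 0" by (simp add: u_def)
          then have i: "i < n" "G i p \<noteq> 0" by (auto simp: w_def split: if_splits)
          have "\<not> i < p" using z0[of i p] i pn by auto
          moreover have "\<pi> i = \<pi> p" using Suc.prems(2) i pn unfolding bd_def by blast
          moreover have "w p \<noteq> 0" using False r0 pn by (simp add: w_def)
          ultimately show ?thesis using True i by (simp add: u_def)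
        next
          case False
          then show ?thesis using u'2 \<open>u s i \<noteq> 0\<close> by (simp add: u_def)
        qed
      qed
      show ?thesis using A B by blast
    qed
  qed
qed

lemma chol:
  assumes "qpsd n G" "bd \<pi> n G"
  shows "\<exists>u. (\<forall>i<n. \<forall>j<n. G i j = (\<Sum>s<n. u s i * cnj (u s j))) \<and>
     (\<forall>s i. u s i \<noteq> 0 \<longrightarrow> s \<le> i \<and> i < n \<and> \<pi> i = \<pi> s \<and> u s s \<noteq> 0)"
  using chol_aux[OF assms, of n] by simp

lemma tri_solve:
  fixes n :: nat and u :: "nat \<Rightarrow> nat \<Rightarrow> complex"
  assumes U: "\<forall>s i. u s i \<noteq> 0 \<longrightarrow> s \<le> i \<and> i < n \<and> \<pi> i = \<pi> s \<and> u s s \<noteq> 0"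
    and s: "s < n" and ss: "u s s \<noteq> 0"
  shows "\<exists>x. (\<forall>r<n. (\<Sum>i<n. cnj (u r i) * x i) = (if r = s then 1 else 0)) \<and>
             (\<forall>i. x i \<noteq> 0 \<longrightarrow> i < n \<and> \<pi> i = \<pi> s)"
proof -
  define T :: "complex mat" where
    "T = mat n n (\<lambda>(r, i). if u r r \<noteq> 0 then cnj (u r i) else (if r = i then 1 else 0))"
  have Tc: "T \<in> carrier_mat n n" by (simp add: T_def)
  have ut: "upper_triangular T"
    unfolding upper_triangular_def T_def using U by (auto simp: not_le[symmetric])
  have "det T = prod_list (diag_mat T)" using det_upper_triangular[OF ut Tc] .
  also have "\<dots> \<noteq> 0"
    unfolding prod_list_zero_iff diag_mat_def T_def by auto
  finally have dT: "det T \<noteq> 0" .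
  from det_non_zero_imp_unit[OF Tc dT, of undefined]
  obtain B where Bc: "B \<in> carrier_mat n n" and TB: "T * B = 1\<^sub>m n"
    by (auto simp: Units_def ring_mat_def)
  define y where "y = B *\<^sub>v unit_vec n s"
  have Ty: "T *\<^sub>v y = unit_vec n s"
    unfolding y_def using Tc Bc TB by (metis assoc_mult_mat_vec one_mult_mat_vec unit_vec_carrier)
  have dy: "dim_vec y = n" using Bc by (simp add: y_def)
  define x0 where "x0 = (\<lambda>i. if i < n then y $ i else 0)"
  have sol: "(\<Sum>i<n. cnj (u r i) * x0 i) = (if r = s then 1 else 0)" if r: "r < n" "u r r \<noteq> 0" for r
  proof -
    have "(T *\<^sub>v y) $ r = (\<Sum>i<n. cnj (u r i) * x0 i)"
      using r Tc dy by (simp add: T_def scalar_prod_def x0_def atLeast0LessThan)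
    then show ?thesis using Ty r s by simp
  qed
  define x where "x = (\<lambda>i. if \<pi> i = \<pi> s then x0 i else 0)"
  show ?thesis
  proof (intro exI[of _ x] conjI allI impI)
    fix r assume r: "r < n"
    show "(\<Sum>i<n. cnj (u r i) * x i) = (if r = s then 1 else 0)"
    proof (cases "u r r = 0")
      case True
      then have "u r i = 0" for i using U by blast
      then show ?thesis using True U s ss by (auto)
    next
      case False
      show ?thesis
      proof (cases "\<pi> r = \<pi> s")
        case True
        have "(\<Sum>i<n. cnj (u r i) * x i) = (\<Sum>i<n. cnj (u r i) * x0 i)"
          using U True by (intro sum.cong) (auto simp: x_def, metis)
        then show ?thesis using sol[OF r False] by simp
      next
        case False
        have "(\<Sum>i<n. cnj (u r i) * x i) = 0"
          using U False by (intro sum.neutral) (auto simp: x_def, metis)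
        then show ?thesis using False by auto
      qed
    qed
  next
    fix i assume "x i \<noteq> 0"
    then show "i < n" by (auto simp: x_def x0_def split: if_splits)
  next
    fix i assume "x i \<noteq> 0"
    then show "\<pi> i = \<pi> s" by (auto simp: x_def x0_def split: if_splits)
  qed
qed

definition ip :: "nat \<Rightarrow> (nat \<Rightarrow> complex) \<Rightarrow> (nat \<Rightarrow> complex) \<Rightarrow> complex" where
  "ip m x y = (\<Sum>j<m. cnj (x j) * y j)"

lemma ip_diff1: "ip m (\<lambda>j. x j - y j) z = ip m x z - ip m y z"
  by (simp add: ip_def algebra_simps sum_subtractf)
lemma ip_diff2: "ip m z (\<lambda>j. x j - y j) = ip m z x - ip m z y"
  by (simp add: ip_def algebra_simps sum_subtractf)
lemma ip_sum1: "ip m (\<lambda>j. \<Sum>s\<in>S. c s * f s j) z = (\<Sum>s\<in>S. cnj (c s) * ip m (f s) z)"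
  by (simp add: ip_def sum_distrib_left sum_distrib_right algebra_simps sum.swap[of _ S])
lemma ip_sum2: "ip m z (\<lambda>j. \<Sum>s\<in>S. c s * f s j) = (\<Sum>s\<in>S. c s * ip m z (f s))"
  by (simp add: ip_def sum_distrib_left sum_distrib_right algebra_simps sum.swap[of _ S])
lemma ip_cnj: "cnj (ip m x y) = ip m y x"
  by (simp add: ip_def mult.commute)
lemma ip_self_real: "Im (ip m x x) = 0"
  by (simp add: ip_def complex_mult_cnj mult.commute[of "cnj _"] flip: complex_norm_square)
lemma ip_self_nonneg: "0 \<le> Re (ip m x x)"
proof -
  have "ip m x x = complex_of_real (\<Sum>j<m. (cmod (x j))^2)"
    unfolding ip_def of_real_sum complex_norm_square by (simp add: mult.commute)
  then show ?thesis by (simp add: sum_nonneg)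
qed

lemma bessel:
  assumes fS: "finite S"
    and orth: "\<forall>s\<in>S. \<forall>t\<in>S. ip m (e s) (e t) = (if s = t then 1 else 0)"
  shows "Re (\<Sum>s\<in>S. cnj (ip m (e s) x) * ip m (e s) x) \<le> Re (ip m x x)"
    and "Im (\<Sum>s\<in>S. cnj (ip m (e s) x) * ip m (e s) x) = 0"
proof -
  define \<beta> where "\<beta> s = ip m (e s) x" for s
  define y where "y j = x j - (\<Sum>s\<in>S. \<beta> s * e s j)" for j
  have a1: "ip m x (\<lambda>j. \<Sum>s\<in>S. \<beta> s * e s j) = (\<Sum>s\<in>S. \<beta> s * cnj (\<beta> s))"
    unfolding ip_sum2 \<beta>_def by (simp add: ip_cnj)
  have a2: "ip m (\<lambda>j. \<Sum>s\<in>S. \<beta> s * e s j) x = (\<Sum>s\<in>S. cnj (\<beta> s) * \<beta> s)"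
    unfolding ip_sum1 \<beta>_def ..
  have a3: "ip m (\<lambda>j. \<Sum>s\<in>S. \<beta> s * e s j) (\<lambda>j. \<Sum>s\<in>S. \<beta> s * e s j) = (\<Sum>s\<in>S. cnj (\<beta> s) * \<beta> s)"
  proof -
    have "ip m (\<lambda>j. \<Sum>s\<in>S. \<beta> s * e s j) (\<lambda>j. \<Sum>s\<in>S. \<beta> s * e s j)
       = (\<Sum>s\<in>S. cnj (\<beta> s) * (\<Sum>t\<in>S. \<beta> t * ip m (e s) (e t)))"
      unfolding ip_sum1 ip_sum2 ..
    also have "\<dots> = (\<Sum>s\<in>S. cnj (\<beta> s) * \<beta> s)"
    proof (intro sum.cong refl)
      fix s assume s: "s \<in> S"
      have "(\<Sum>t\<in>S. \<beta> t * ip m (e s) (e t)) = (\<Sum>t\<in>S. if s = t then \<beta> t else 0)"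
        using orth s by (intro sum.cong refl) auto
      also have "\<dots> = \<beta> s" using s fS by simp
      finally show "cnj (\<beta> s) * (\<Sum>t\<in>S. \<beta> t * ip m (e s) (e t)) = cnj (\<beta> s) * \<beta> s" by simp
    qed
    finally show ?thesis .
  qed
  have "ip m y y = ip m x x - (\<Sum>s\<in>S. cnj (\<beta> s) * \<beta> s)"
    unfolding y_def ip_diff1 ip_diff2 a1 a2 a3 by (simp add: mult.commute)
  then have e: "(\<Sum>s\<in>S. cnj (\<beta> s) * \<beta> s) = ip m x x - ip m y y" by simp
  show "Re (\<Sum>s\<in>S. cnj (ip m (e s) x) * ip m (e s) x) \<le> Re (ip m x x)"
    using e ip_self_nonneg[of m y] unfolding \<beta>_def by simp
  show "Im (\<Sum>s\<in>S. cnj (ip m (e s) x) * ip m (e s) x) = 0"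
    using e ip_self_real[of m y] ip_self_real[of m x] unfolding \<beta>_def by simp
qed

lemma ip_adj:
  "ip m (\<lambda>j. \<Sum>i<n. cnj (A i j) * y i) (\<lambda>j. \<Sum>i<n. cnj (A i j) * z i)
   = (\<Sum>i<n. \<Sum>i'<n. cnj (y i) * z i' * (\<Sum>j<m. A i j * cnj (A i' j)))"
proof -
  have "ip m (\<lambda>j. \<Sum>i<n. cnj (A i j) * y i) (\<lambda>j. \<Sum>i<n. cnj (A i j) * z i)
     = (\<Sum>j<m. \<Sum>i<n. \<Sum>i'<n. cnj (y i) * z i' * (A i j * cnj (A i' j)))"
    unfolding ip_def cnj_sum sum_product by (simp add: algebra_simps)
  also have "\<dots> = (\<Sum>i<n. \<Sum>j<m. \<Sum>i'<n. cnj (y i) * z i' * (A i j * cnj (A i' j)))"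
    by (rule sum.swap)
  also have "\<dots> = (\<Sum>i<n. \<Sum>i'<n. \<Sum>j<m. cnj (y i) * z i' * (A i j * cnj (A i' j)))"
    by (intro sum.cong refl sum.swap)
  also have "\<dots> = (\<Sum>i<n. \<Sum>i'<n. cnj (y i) * z i' * (\<Sum>j<m. A i j * cnj (A i' j)))"
    by (simp add: sum_distrib_left)
  finally show ?thesis .
qed

lemma gram_L:
  assumes "\<forall>i<n. \<forall>i'<n. (\<Sum>j<m. A i j * cnj (A i' j)) = (\<Sum>s<n. u s i * cnj (u s i'))"
  shows "ip m (\<lambda>j. \<Sum>i<n. cnj (A i j) * y i) (\<lambda>j. \<Sum>i<n. cnj (A i j) * z i)
       = ip n (\<lambda>r. \<Sum>i<n. cnj (u r i) * y i) (\<lambda>r. \<Sum>i<n. cnj (u r i) * z i)"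
  unfolding ip_adj[where m=m and A=A and n=n and y=y and z=z] ip_adj[where m=n and A="\<lambda>i r. u r i" and n=n and y=y and z=z]
  using assms by (intro sum.cong refl) auto

lemma ip_zero:
  fixes m :: nat
  assumes "ip m x x = 0" "j < m" shows "x j = 0"
  using sum_sq_zero[of x m j] assms unfolding ip_def by (simp add: mult.commute)

lemma sum_ev: "i < n \<Longrightarrow> (\<Sum>i'<n. f i' * ev i i') = f i"
proof -
  assume i: "i < n"
  have "(\<Sum>i'<n. f i' * ev i i') = (\<Sum>i'<n. if i' = i then f i else 0)"
    by (rule sum.cong) (auto simp: ev_def)
  then show ?thesis using i by simp
qed

lemma sum_swap_mult: fixes f :: "nat \<Rightarrow> complex" shows "(\<Sum>i\<in>I. f i * (\<Sum>s\<in>S. g s * h s i)) = (\<Sum>s\<in>S. g s * (\<Sum>i\<in>I. f i * h s i))"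
proof -
  have "(\<Sum>i\<in>I. f i * (\<Sum>s\<in>S. g s * h s i)) = (\<Sum>i\<in>I. \<Sum>s\<in>S. g s * (f i * h s i))"
    by (simp add: sum_distrib_left algebra_simps)
  also have "\<dots> = (\<Sum>s\<in>S. \<Sum>i\<in>I. g s * (f i * h s i))" by (rule sum.swap)
  also have "\<dots> = (\<Sum>s\<in>S. g s * (\<Sum>i\<in>I. f i * h s i))" by (simp add: sum_distrib_left)
  finally show ?thesis .
qed

lemma iso:
  fixes n m k :: nat and A C :: "nat \<Rightarrow> nat \<Rightarrow> complex" and par :: "nat \<Rightarrow> bool"
  assumes gram: "\<forall>i<n. \<forall>i'<n. (\<Sum>j<m. A i j * cnj (A i' j)) = (\<Sum>l<k. C i l * cnj (C i' l))"
    and pA: "\<forall>i j. A i j \<noteq> 0 \<longrightarrow> (par i = par j) = ev_v"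
    and pC: "\<forall>i l. C i l \<noteq> 0 \<longrightarrow> (par i = par l) = ev_w"
  shows "\<exists>D. (\<forall>i<n. \<forall>l<k. (\<Sum>j<m. D l j * A i j) = C i l) \<and>
     (\<forall>x. Re (ip k (\<lambda>l. \<Sum>j<m. D l j * x j) (\<lambda>l. \<Sum>j<m. D l j * x j)) \<le> Re (ip m x x)) \<and>
     (\<forall>l j. D l j \<noteq> 0 \<longrightarrow> (par l = par j) = (ev_v = ev_w))"
proof -
  define \<rho> where "\<rho> i i' = (\<Sum>j<m. A i j * cnj (A i' j))" for i i'
  have q\<rho>: "qpsd n \<rho>"
  proof -
    have "bf n \<rho> x x = ip m (\<lambda>j. \<Sum>i<n. cnj (A i j) * x i) (\<lambda>j. \<Sum>i<n. cnj (A i j) * x i)" for x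
      unfolding ip_adj bf_def \<rho>_def by (simp add: algebra_simps)
    then show ?thesis unfolding qpsd_def using ip_self_real ip_self_nonneg by simp
  qed
  have b\<rho>: "bd par n \<rho>"
    unfolding bd_def \<rho>_def
  proof (intro allI impI sum.neutral ballI)
    fix i i' j assume "par i \<noteq> par i'"
    then show "A i j * cnj (A i' j) = 0" using pA by (metis complex_cnj_zero mult_eq_0_iff)
  qed
  obtain u where u1: "\<forall>i<n. \<forall>j<n. \<rho> i j = (\<Sum>s<n. u s i * cnj (u s j))"
    and U: "\<forall>s i. u s i \<noteq> 0 \<longrightarrow> s \<le> i \<and> i < n \<and> par i = par s \<and> u s s \<noteq> 0"
    using chol[OF q\<rho> b\<rho>] by blast
  have uA: "\<forall>i<n. \<forall>i'<n. (\<Sum>j<m. A i j * cnj (A i' j)) = (\<Sum>s<n. u s i * cnj (u s i'))"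
    using u1 by (simp add: \<rho>_def)
  have uC: "\<forall>i<n. \<forall>i'<n. (\<Sum>l<k. C i l * cnj (C i' l)) = (\<Sum>s<n. u s i * cnj (u s i'))"
    using uA gram by simp
  define S where "S = {s. s < n \<and> u s s \<noteq> 0}"
  have fS: "finite S" by (simp add: S_def)
  have "\<forall>s\<in>S. \<exists>x. (\<forall>r<n. (\<Sum>i<n. cnj (u r i) * x i) = (if r = s then 1 else 0)) \<and>
             (\<forall>i. x i \<noteq> 0 \<longrightarrow> i < n \<and> par i = par s)"
    using tri_solve[OF U] by (auto simp: S_def)
  then obtain X where X: "\<forall>s\<in>S. (\<forall>r<n. (\<Sum>i<n. cnj (u r i) * X s i) = (if r = s then 1 else 0)) \<and>
             (\<forall>i. X s i \<noteq> 0 \<longrightarrow> i < n \<and> par i = par s)"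
    by (rule bchoice[elim_format]) blast
  define Ls where "Ls y r = (\<Sum>i<n. cnj (u r i) * y i)" for y r
  have LX: "Ls (X s) r = (if r = s then 1 else 0)" if "s \<in> S" "r < n" for s r
    using X that by (simp add: Ls_def)
  have u0: "u r i = 0" if "r \<notin> S" "r < n" for r i
    using that U by (auto simp: S_def)
  define q where "q s j = (\<Sum>i<n. cnj (A i j) * X s i)" for s j
  define q' where "q' s l = (\<Sum>i<n. cnj (C i l) * X s i)" for s l
  have Sn: "s \<in> S \<Longrightarrow> s < n" for s by (simp add: S_def)
  have LL: "ip n (Ls (X s)) (Ls (X t)) = (if s = t then 1 else 0)" if "s \<in> S" "t \<in> S" for s t
  proof -
    have "ip n (Ls (X s)) (Ls (X t)) = (\<Sum>r<n. if r = s then (if s = t then 1 else 0) else 0)"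
      unfolding ip_def using LX that by (intro sum.cong refl) auto
    also have "\<dots> = (if s = t then 1 else 0)" using Sn[OF that(1)] by simp
    finally show ?thesis .
  qed
  have qorth: "ip m (q s) (q t) = (if s = t then 1 else 0)" if "s \<in> S" "t \<in> S" for s t
    using gram_L[OF uA, of "X s" "X t"] LL[OF that] unfolding q_def Ls_def by simp
  have q'orth: "ip k (q' s) (q' t) = (if s = t then 1 else 0)" if "s \<in> S" "t \<in> S" for s t
    using gram_L[OF uC, of "X s" "X t"] LL[OF that] unfolding q'_def Ls_def by simp
  define D where "D l j = (\<Sum>s\<in>S. cnj (q' s l) * q s j)" for l j
  have P1: "(\<Sum>j<m. D l j * A i j) = C i l" if il: "i < n" "l < k" for i l
  proof -
    have Aq: "(\<Sum>j<m. q s j * A i j) = u s i" if s: "s \<in> S" for s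
    proof -
      have "(\<lambda>j. \<Sum>i'<n. cnj (A i' j) * ev i i') = (\<lambda>j. cnj (A i j))"
        using sum_ev[OF il(1)] by simp
      then have "(\<Sum>j<m. q s j * A i j) = ip m (\<lambda>j. \<Sum>i'<n. cnj (A i' j) * ev i i') (q s)"
        by (simp add: ip_def mult.commute)
      also have "\<dots> = ip n (Ls (ev i)) (Ls (X s))"
        using gram_L[OF uA, of "ev i" "X s"] unfolding q_def Ls_def by simp
      also have "\<dots> = (\<Sum>r<n. cnj (Ls (ev i) r) * (if r = s then 1 else 0))"
        unfolding ip_def using LX[OF s] by (intro sum.cong refl) auto
      also have "\<dots> = cnj (Ls (ev i) s)" using Sn[OF s] by (simp add: if_distrib cong: if_cong)
      also have "\<dots> = u s i" using il by (simp add: Ls_def ev_def if_distrib cong: if_cong)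
      finally show ?thesis .
    qed
    have lhs: "(\<Sum>j<m. D l j * A i j) = (\<Sum>s\<in>S. cnj (q' s l) * u s i)"
    proof -
      have "(\<Sum>j<m. D l j * A i j) = (\<Sum>j<m. A i j * (\<Sum>s\<in>S. cnj (q' s l) * q s j))"
        unfolding D_def by (simp add: mult.commute)
      also have "\<dots> = (\<Sum>s\<in>S. cnj (q' s l) * (\<Sum>j<m. A i j * q s j))"
        by (rule sum_swap_mult)
      finally have "(\<Sum>j<m. D l j * A i j) = (\<Sum>s\<in>S. cnj (q' s l) * (\<Sum>j<m. q s j * A i j))"
        by (simp add: mult.commute)
      then show ?thesis using Aq by simp
    qed
    define d where "d i' = ev i i' - (\<Sum>s\<in>S. cnj (u s i) * X s i')" for i'
    have Ld: "Ls d r = 0" if r: "r < n" for r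
    proof -
      have "Ls d r = (\<Sum>i'<n. cnj (u r i') * ev i i') - (\<Sum>i'<n. cnj (u r i') * (\<Sum>s\<in>S. cnj (u s i) * X s i'))"
        unfolding Ls_def d_def by (simp add: right_diff_distrib sum_subtractf)
      also have "\<dots> = cnj (u r i) - (\<Sum>s\<in>S. cnj (u s i) * Ls (X s) r)"
        unfolding sum_ev[OF il(1)] Ls_def by (subst sum_swap_mult) (rule refl)
      also have "(\<Sum>s\<in>S. cnj (u s i) * Ls (X s) r) = (\<Sum>s\<in>S. if s = r then cnj (u r i) else 0)"
        using LX r by (intro sum.cong refl) auto
      also have "\<dots> = (if r \<in> S then cnj (u r i) else 0)" using fS by simp
      finally show ?thesis using u0[of r i] r by auto
    qed
    define Cs where "Cs y l' = (\<Sum>i'<n. cnj (C i' l') * y i')" for y l'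
    have "ip k (Cs d) (Cs d) = ip n (Ls d) (Ls d)"
      using gram_L[OF uC, of d d] unfolding Cs_def Ls_def by simp
    also have "\<dots> = 0" unfolding ip_def using Ld by simp
    finally have "Cs d l = 0" using ip_zero il by blast
    moreover have "Cs d l = cnj (C i l) - (\<Sum>s\<in>S. cnj (u s i) * q' s l)"
    proof -
      have "Cs d l = (\<Sum>i'<n. cnj (C i' l) * ev i i') - (\<Sum>i'<n. cnj (C i' l) * (\<Sum>s\<in>S. cnj (u s i) * X s i'))"
        unfolding Cs_def d_def by (simp add: right_diff_distrib sum_subtractf)
      also have "\<dots> = cnj (C i l) - (\<Sum>s\<in>S. cnj (u s i) * q' s l)"
        unfolding sum_ev[OF il(1)] q'_def by (subst sum_swap_mult) (rule refl)
      finally show ?thesis .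
    qed
    ultimately have "cnj (C i l) = (\<Sum>s\<in>S. cnj (u s i) * q' s l)" by simp
    then have "C i l = cnj (\<Sum>s\<in>S. cnj (u s i) * q' s l)" by (metis complex_cnj_cnj)
    then show ?thesis unfolding lhs by (simp add: mult.commute)
  qed
  have P2: "Re (ip k (\<lambda>l. \<Sum>j<m. D l j * x j) (\<lambda>l. \<Sum>j<m. D l j * x j)) \<le> Re (ip m x x)" for x
  proof -
    define \<beta> where "\<beta> s = ip m (\<lambda>j. cnj (q s j)) x" for s
    have Dx: "(\<lambda>l. \<Sum>j<m. D l j * x j) = (\<lambda>l. \<Sum>s\<in>S. \<beta> s * cnj (q' s l))"
      unfolding D_def \<beta>_def ip_def sum_distrib_right sum_distrib_left
      by (rule ext, subst sum.swap) (simp add: algebra_simps)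
    have "ip k (\<lambda>l. \<Sum>j<m. D l j * x j) (\<lambda>l. \<Sum>j<m. D l j * x j)
       = (\<Sum>s\<in>S. cnj (\<beta> s) * (\<Sum>t\<in>S. \<beta> t * ip k (\<lambda>l. cnj (q' s l)) (\<lambda>l. cnj (q' t l))))"
      unfolding Dx ip_sum1 ip_sum2 ..
    also have "\<dots> = (\<Sum>s\<in>S. cnj (\<beta> s) * \<beta> s)"
    proof (intro sum.cong refl)
      fix s assume s: "s \<in> S"
      have "(\<Sum>t\<in>S. \<beta> t * ip k (\<lambda>l. cnj (q' s l)) (\<lambda>l. cnj (q' t l))) = (\<Sum>t\<in>S. if s = t then \<beta> t else 0)"
      proof (intro sum.cong refl)
        fix t assume t: "t \<in> S"
        have "ip k (\<lambda>l. cnj (q' s l)) (\<lambda>l. cnj (q' t l)) = cnj (ip k (q' s) (q' t))"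
          by (simp add: ip_def)
        then show "\<beta> t * ip k (\<lambda>l. cnj (q' s l)) (\<lambda>l. cnj (q' t l)) = (if s = t then \<beta> t else 0)"
          using q'orth[OF s t] by simp
      qed
      also have "\<dots> = \<beta> s" using s fS by simp
      finally show "cnj (\<beta> s) * (\<Sum>t\<in>S. \<beta> t * ip k (\<lambda>l. cnj (q' s l)) (\<lambda>l. cnj (q' t l))) = cnj (\<beta> s) * \<beta> s"
        by simp
    qed
    finally have e: "ip k (\<lambda>l. \<Sum>j<m. D l j * x j) (\<lambda>l. \<Sum>j<m. D l j * x j) = (\<Sum>s\<in>S. cnj (\<beta> s) * \<beta> s)" .
    have orth: "\<forall>s\<in>S. \<forall>t\<in>S. ip m (\<lambda>j. cnj (q s j)) (\<lambda>j. cnj (q t j)) = (if s = t then 1 else 0)"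
    proof (intro ballI)
      fix s t assume st: "s \<in> S" "t \<in> S"
      have "ip m (\<lambda>j. cnj (q s j)) (\<lambda>j. cnj (q t j)) = cnj (ip m (q s) (q t))" by (simp add: ip_def)
      then show "ip m (\<lambda>j. cnj (q s j)) (\<lambda>j. cnj (q t j)) = (if s = t then 1 else 0)" using qorth[OF st] by simp
    qed
    show ?thesis unfolding e \<beta>_def using bessel(1)[OF fS orth, of x] .
  qed
  have P3: "(par l = par j) = (ev_v = ev_w)" if D0: "D l j \<noteq> 0" for l j
  proof -
    obtain s where s: "s \<in> S" "cnj (q' s l) * q s j \<noteq> 0"
      by (rule sum.not_neutral_contains_not_neutral[OF D0[unfolded D_def]])
    then have s2: "q' s l \<noteq> 0" "q s j \<noteq> 0" by auto
    obtain i where "i \<in> {..<n}" "cnj (C i l) * X s i \<noteq> 0"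
      by (rule sum.not_neutral_contains_not_neutral[OF s2(1)[unfolded q'_def]])
    then have i: "C i l \<noteq> 0" "X s i \<noteq> 0" by auto
    obtain i' where "i' \<in> {..<n}" "cnj (A i' j) * X s i' \<noteq> 0"
      by (rule sum.not_neutral_contains_not_neutral[OF s2(2)[unfolded q_def]])
    then have i': "A i' j \<noteq> 0" "X s i' \<noteq> 0" by auto
    have "par i = par s" "par i' = par s" using X s(1) i(2) i'(2) by auto
    moreover have "(par i = par l) = ev_w" using pC i(1) by blast
    moreover have "(par i' = par j) = ev_v" using pA i'(1) by blast
    ultimately show ?thesis by blast
  qed
  show ?thesis using P1 P2 P3 by blast
qed

lemma not_bit_big: "(n::nat) < 2^t \<Longrightarrow> \<not> bit n t"
  by (simp add: bit_iff_odd div_less)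

lemma sum_ext_zero:
  fixes f :: "nat \<Rightarrow> 'b::comm_monoid_add"
  assumes "a \<le> b" "\<forall>t. a \<le> t \<longrightarrow> f t = 0"
  shows "(\<Sum>t<a. f t) = (\<Sum>t<b. f t)"
  by (rule sum.mono_neutral_left) (use assms in auto)

lemma bitcount_ext:
  assumes "\<forall>t\<ge>N. \<not> bit n t"
  shows "bitcount n = (\<Sum>t<N. if bit n t then 1 else 0)"
proof -
  have big: "\<not> bit n t" if "n \<le> t" for t
  proof -
    have "n < 2^n" by (rule less_exp)
    also have "\<dots> \<le> 2^t" using that by simp
    finally show ?thesis by (rule not_bit_big)
  qed
  have "bitcount n = (\<Sum>t<max n N. if bit n t then 1 else 0)"
    unfolding bitcount_def by (rule sum_ext_zero) (use big in auto)
  also have "\<dots> = (\<Sum>t<N. if bit n t then 1 else 0)"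
    by (rule sum_ext_zero[symmetric]) (use assms in auto)
  finally show ?thesis .
qed

lemma bit_concat:
  fixes i k :: nat
  assumes k: "k < 2^M"
  shows "bit (i * 2^M + k) t = (if t < M then bit k t else bit i (t - M))"
proof -
  have kb: "\<not> bit k t" if "M \<le> t" for t
  proof -
    have "k < 2^t" using k that by (meson order_less_le_trans one_le_numeral power_increasing)
    then show ?thesis by (rule not_bit_big)
  qed
  have "i * 2^M + k = push_bit M i + k" by (simp add: push_bit_eq_mult)
  moreover have "bit (push_bit M i + k) t = (bit (push_bit M i) t \<or> bit k t)"
    by (rule bit_disjunctive_add_iff) (use kb in \<open>auto simp: bit_push_bit_iff_nat\<close>)
  ultimately show ?thesis using kb by (auto simp: bit_push_bit_iff_nat)
qed

lemma bitcount_concat: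
  fixes i k :: nat
  assumes k: "k < 2^M"
  shows "bitcount (i * 2^M + k) = bitcount i + bitcount k"
proof -
  have hi: "\<not> bit i t" if "i \<le> t" for t
  proof -
    have "i < 2^i" by (rule less_exp)
    also have "\<dots> \<le> 2^t" using that by simp
    finally show ?thesis by (rule not_bit_big)
  qed
  have kb: "\<forall>t\<ge>M. \<not> bit k t"
  proof (intro allI impI)
    fix t assume "M \<le> t"
    then have "k < 2^t" using k by (meson order_less_le_trans one_le_numeral power_increasing)
    then show "\<not> bit k t" by (rule not_bit_big)
  qed
  have "bitcount (i * 2^M + k) = (\<Sum>t<M + i. if bit (i * 2^M + k) t then 1 else 0)"
    by (rule bitcount_ext) (auto simp: bit_concat[OF k] intro!: hi)
  also have "\<dots> = (\<Sum>t\<in>{0..<M}. if bit (i * 2^M + k) t then 1 else 0) + (\<Sum>t\<in>{M..<M + i}. if bit (i * 2^M + k) t then 1 else 0)"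
    by (simp add: lessThan_atLeast0 sum.atLeastLessThan_concat)
  also have "(\<Sum>t\<in>{0..<M}. if bit (i * 2^M + k) t then 1 else 0) = (\<Sum>t<M. if bit k t then 1 else 0)"
    by (simp add: lessThan_atLeast0 bit_concat[OF k])
  also have "\<dots> = bitcount k" using bitcount_ext[OF kb] by simp
  also have "(\<Sum>t\<in>{M..<M + i}. if bit (i * 2^M + k) t then 1 else 0) = (\<Sum>t\<in>{0 + M..<i + M}. if bit i (t - M) then 1 else 0)"
    by (intro sum.cong) (auto simp: bit_concat[OF k])
  also have "\<dots> = (\<Sum>t<i. if bit i t then 1 else 0)"
    unfolding sum.shift_bounds_nat_ivl by (simp add: lessThan_atLeast0)
  also have "\<dots> = bitcount i" by (simp add: bitcount_def)
  finally show ?thesis by simp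
qed

lemma even_occ_concat:
  fixes i k :: nat
  assumes "k < 2^M"
  shows "even_occ (i * 2^M + k) \<longleftrightarrow> (even_occ i \<longleftrightarrow> even_occ k)"
  unfolding even_occ_def bitcount_concat[OF assms] by simp

lemma even_occ_0: "even_occ 0"
  by (simp add: even_occ_def bitcount_def)

lemma sum_reindex:
  fixes f :: "nat \<Rightarrow> 'b::comm_monoid_add"
  shows "(\<Sum>x<a * b. f x) = (\<Sum>i<a. \<Sum>k<b. f (i * b + k))"
proof (induction a)
  case 0 then show ?case by simp
next
  case (Suc a)
  have "(\<Sum>x<Suc a * b. f x) = (\<Sum>x\<in>{0..<a * b}. f x) + (\<Sum>x\<in>{a * b..<a * b + b}. f x)"
    by (simp add: lessThan_atLeast0 sum.atLeastLessThan_concat add.commute)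
  also have "(\<Sum>x\<in>{a * b..<a * b + b}. f x) = (\<Sum>k<b. f (a * b + k))"
    using sum.shift_bounds_nat_ivl[of f 0 "a * b" b] by (simp add: lessThan_atLeast0 add.commute)
  finally show ?case using Suc by (simp add: lessThan_atLeast0)
qed

lemma mult_mat_vec_entry:
  assumes "A \<in> carrier_mat nr nc" "dim_vec v = nc" "i < nr"
  shows "(A *\<^sub>v v) $ i = (\<Sum>j<nc. A $$ (i, j) * v $ j)"
  using assms by (simp add: scalar_prod_def lessThan_atLeast0)

lemma psd_qpsd: assumes "psd n A" shows "qpsd n (\<lambda>i j. A $$ (i, j))"
  unfolding qpsd_def
proof
  fix x :: "nat \<Rightarrow> complex"
  have Ac: "A \<in> carrier_mat n n" using assms by (simp add: psd_def)
  define v where "v = vec n x"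
  have "(\<Sum>i<n. cnj (v $ i) * (A *\<^sub>v v) $ i) = bf n (\<lambda>i j. A $$ (i, j)) x x"
    unfolding bf_def using Ac
    by (intro sum.cong refl) (simp add: v_def sum_distrib_left algebra_simps scalar_prod_def lessThan_atLeast0)
  moreover have "dim_vec v = n" by (simp add: v_def)
  ultimately show "Im (bf n (\<lambda>i j. A $$ (i, j)) x x) = 0 \<and> 0 \<le> Re (bf n (\<lambda>i j. A $$ (i, j)) x x)"
    using assms unfolding psd_def Let_def by metis
qed

lemma qpsd_add: "qpsd n F \<Longrightarrow> qpsd n G \<Longrightarrow> qpsd n (\<lambda>i j. F i j + G i j)"
proof -
  assume F: "qpsd n F" and G: "qpsd n G"
  have "bf n (\<lambda>i j. F i j + G i j) x x = bf n F x x + bf n G x x" for x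
    by (simp add: bf_def algebra_simps sum.distrib)
  then show ?thesis using F G unfolding qpsd_def by simp
qed

lemma fstate_props:
  assumes "fstate L \<rho>"
  shows "qpsd (2^L) (\<lambda>i j. \<rho> $$ (i, j))" "bd even_occ (2^L) (\<lambda>i j. \<rho> $$ (i, j))"
    "\<rho> \<in> carrier_mat (2^L) (2^L)"
proof -
  obtain \<rho>e \<rho>o where r: "\<rho> = \<rho>e + \<rho>o" "psd (2^L) \<rho>e" "psd (2^L) \<rho>o"
    "supported_on (2^L) True \<rho>e" "supported_on (2^L) False \<rho>o"
    using assms unfolding fstate_def by blast
  have c: "\<rho>e \<in> carrier_mat (2^L) (2^L)" "\<rho>o \<in> carrier_mat (2^L) (2^L)" using r by (auto simp: psd_def)
  have e: "\<rho> $$ (i, j) = \<rho>e $$ (i, j) + \<rho>o $$ (i, j)" if "i < 2^L" "j < 2^L" for i j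
    using c that r(1) by simp
  have "qpsd (2^L) (\<lambda>i j. \<rho>e $$ (i, j) + \<rho>o $$ (i, j))"
    by (rule qpsd_add[OF psd_qpsd[OF r(2)] psd_qpsd[OF r(3)]])
  moreover have "bf (2^L) (\<lambda>i j. \<rho> $$ (i, j)) x x = bf (2^L) (\<lambda>i j. \<rho>e $$ (i, j) + \<rho>o $$ (i, j)) x x" for x
    unfolding bf_def using e by simp
  ultimately show "qpsd (2^L) (\<lambda>i j. \<rho> $$ (i, j))" unfolding qpsd_def by simp
  show "bd even_occ (2^L) (\<lambda>i j. \<rho> $$ (i, j))"
    unfolding bd_def using e r(4,5) unfolding supported_on_def by (metis add.right_neutral)
  show "\<rho> \<in> carrier_mat (2^L) (2^L)" using assms by (simp add: fstate_def)
qed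

lemma outer_mult:
  assumes W: "W \<in> carrier_mat N N'" and v: "dim_vec v = N'"
  shows "W * outer v * cadj W = outer (W *\<^sub>v v)"
proof (rule eq_matI)
  show "dim_row (W * outer v * cadj W) = dim_row (outer (W *\<^sub>v v))"
    using W by (simp add: outer_def cadj_def)
  show "dim_col (W * outer v * cadj W) = dim_col (outer (W *\<^sub>v v))"
    using W by (simp add: outer_def cadj_def)
  fix x y assume xy: "x < dim_row (outer (W *\<^sub>v v))" "y < dim_col (outer (W *\<^sub>v v))"
  then have x: "x < N" and y: "y < N" using W by (auto simp: outer_def)
  have "(W * outer v * cadj W) $$ (x, y) = (\<Sum>b<N'. (\<Sum>a<N'. W $$ (x, a) * (v $ a * cnj (v $ b))) * cnj (W $$ (y, b)))"
    using W v x y by (simp add: outer_def cadj_def scalar_prod_def lessThan_atLeast0)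
  also have "\<dots> = (\<Sum>b<N'. \<Sum>a<N'. W $$ (x, a) * v $ a * (cnj (W $$ (y, b)) * cnj (v $ b)))"
    by (simp add: sum_distrib_left sum_distrib_right algebra_simps)
  also have "\<dots> = (\<Sum>a<N'. \<Sum>b<N'. W $$ (x, a) * v $ a * (cnj (W $$ (y, b)) * cnj (v $ b)))"
    by (rule sum.swap)
  also have "\<dots> = (\<Sum>a<N'. W $$ (x, a) * v $ a) * (\<Sum>b<N'. cnj (W $$ (y, b)) * cnj (v $ b))"
    by (simp add: sum_product)
  also have "\<dots> = (\<Sum>a<N'. W $$ (x, a) * v $ a) * cnj (\<Sum>b<N'. W $$ (y, b) * v $ b)"
    by (simp add: cnj_sum)
  also have "\<dots> = outer (W *\<^sub>v v) $$ (x, y)"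
    using W v x y by (simp add: outer_def scalar_prod_def lessThan_atLeast0 cnj_sum)
  finally show "(W * outer v * cadj W) $$ (x, y) = outer (W *\<^sub>v v) $$ (x, y)" .
qed

lemma foldr_add_entry:
  assumes "\<forall>D\<in>set Ks. f D \<in> carrier_mat N N"
  shows "foldr (+) (map f Ks) (0\<^sub>m N N) \<in> carrier_mat N N \<and>
    (\<forall>i<N. \<forall>j<N. foldr (+) (map f Ks) (0\<^sub>m N N) $$ (i, j) = (\<Sum>D\<leftarrow>Ks. f D $$ (i, j)))"
  using assms by (induction Ks) auto

lemma fpure_vec:
  assumes "fpure N \<Psi>"
  shows "\<exists>v p. dim_vec v = 2^N \<and> v \<noteq> 0\<^sub>v (2^N) \<and> \<Psi> = outer v \<and> (\<forall>x<2^N. v $ x \<noteq> 0 \<longrightarrow> even_occ x = p)"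
proof -
  obtain v where v: "dim_vec v = 2^N" "v \<noteq> 0\<^sub>v (2^N)" "\<Psi> = outer v"
    using assms unfolding fpure_def by blast
  obtain \<rho>e \<rho>o where r: "\<Psi> = \<rho>e + \<rho>o" "psd (2^N) \<rho>e" "psd (2^N) \<rho>o"
    "supported_on (2^N) True \<rho>e" "supported_on (2^N) False \<rho>o"
    using assms unfolding fpure_def fstate_def by blast
  have c: "\<rho>e \<in> carrier_mat (2^N) (2^N)" "\<rho>o \<in> carrier_mat (2^N) (2^N)" using r by (auto simp: psd_def)
  have z: "v $ x * cnj (v $ y) = 0" if "x < 2^N" "y < 2^N" "even_occ x \<noteq> even_occ y" for x y
  proof -
    have "\<Psi> $$ (x, y) = \<rho>e $$ (x, y) + \<rho>o $$ (x, y)" using c that r(1) by simp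
    also have "\<dots> = 0" using r(4,5) that unfolding supported_on_def by (metis add.right_neutral)
    finally show ?thesis using v that by (simp add: outer_def)
  qed
  obtain x0 where x0: "x0 < 2^N" "v $ x0 \<noteq> 0"
    using v(1,2) by (metis eq_vecI index_zero_vec(1) index_zero_vec(2))
  have "\<forall>x<2^N. v $ x \<noteq> 0 \<longrightarrow> even_occ x = even_occ x0"
    using z x0 by fastforce
  then show ?thesis using v by blast
qed

lemma idx_lt: "i < (n::nat) \<Longrightarrow> j < m \<Longrightarrow> i * m + j < n * m"
proof -
  assume "i < n" "j < m"
  then have "i * m + j < i * m + m" by simp
  also have "\<dots> = Suc i * m" by simp
  also have "\<dots> \<le> n * m" using \<open>i < n\<close> by (intro mult_right_mono) auto
  finally show ?thesis .
qed

lemma fptrace_outer: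
  assumes "dim_vec v = 2^(L + M)" "i < 2^L" "i' < 2^L"
  shows "fptrace L M (outer v) $$ (i, i') = (\<Sum>j<2^M. v $ (i * 2^M + j) * cnj (v $ (i' * 2^M + j)))"
proof -
  have "i * 2^M + j < 2^(L+M)" "i' * 2^M + j < 2^(L+M)" if "j < 2^M" for j
    using idx_lt[OF assms(2) that] idx_lt[OF assms(3) that] by (simp_all add: power_add)
  then show ?thesis using assms by (simp add: fptrace_def outer_def)
qed

lemma kron_mult_vec:
  assumes X: "X \<in> carrier_mat n n" and Xd: "\<forall>i<n. \<forall>i'<n. i \<noteq> i' \<longrightarrow> X $$ (i, i') = 0"
    and B: "B \<in> carrier_mat k m" and v: "dim_vec v = n * m" and x: "x < n * k"
  shows "(kron X B *\<^sub>v v) $ x = X $$ (x div k, x div k) * (\<Sum>j<m. B $$ (x mod k, j) * v $ (x div k * m + j))"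
proof -
  have k: "0 < k" using x by (cases k) auto
  have xd: "x div k < n" using x by (simp add: less_mult_imp_div_less)
  have xm: "x mod k < k" using k by simp
  have Kc: "kron X B \<in> carrier_mat (n * k) (n * m)" using X B by (simp add: kron_def)
  have "(kron X B *\<^sub>v v) $ x = (\<Sum>y<n * m. kron X B $$ (x, y) * v $ y)"
    using mult_mat_vec_entry[OF Kc v x] .
  also have "\<dots> = (\<Sum>i'<n. \<Sum>j<m. kron X B $$ (x, i' * m + j) * v $ (i' * m + j))"
    by (rule sum_reindex)
  also have "\<dots> = (\<Sum>i'<n. \<Sum>j<m. X $$ (x div k, i') * B $$ (x mod k, j) * v $ (i' * m + j))"
  proof (intro sum.cong refl)
    fix i' j assume "i' \<in> {..<n}" "j \<in> {..<m}"
    then have "i' < n" "j < m" by auto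
    then have "(i' * m + j) div m = i'" "(i' * m + j) mod m = j" by auto
    moreover have "i' * m + j < n * m" using idx_lt \<open>i' < n\<close> \<open>j < m\<close> .
    ultimately show "kron X B $$ (x, i' * m + j) * v $ (i' * m + j) = X $$ (x div k, i') * B $$ (x mod k, j) * v $ (i' * m + j)"
      using X B x by (simp add: kron_def)
  qed
  also have "\<dots> = (\<Sum>i'<n. if i' = x div k then X $$ (x div k, x div k) * (\<Sum>j<m. B $$ (x mod k, j) * v $ (x div k * m + j)) else 0)"
    using Xd xd by (intro sum.cong refl) (auto simp: sum_distrib_left algebra_simps)
  also have "\<dots> = X $$ (x div k, x div k) * (\<Sum>j<m. B $$ (x mod k, j) * v $ (x div k * m + j))"
    using xd by simp
  finally show ?thesis .
qed

lemma bf_IminusDD: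
  "bf m (\<lambda>j j'. (if j = j' then 1 else 0) - (\<Sum>l<k. cnj (B l j) * B l j')) x x
   = ip m x x - ip k (\<lambda>l. \<Sum>j<m. B l j * x j) (\<lambda>l. \<Sum>j<m. B l j * x j)"
proof -
  have d: "bf m (\<lambda>j j'. (if j = j' then 1 else 0) - (\<Sum>l<k. cnj (B l j) * B l j')) x x
     = bf m (\<lambda>j j'. if j = j' then 1 else 0) x x - bf m (\<lambda>j j'. \<Sum>l<k. cnj (B l j) * B l j') x x"
    by (simp add: bf_def algebra_simps sum_subtractf)
  have e: "(\<Sum>j<m. cnj (x i) * (if i = j then 1 else 0) * x j) = (\<Sum>j<m. if j = i then cnj (x i) * x i else 0)" for i
    by (rule sum.cong) auto
  have 1: "bf m (\<lambda>j j'. if j = j' then 1 else 0) x x = ip m x x"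
    unfolding bf_def ip_def e by simp
  have 2: "ip k (\<lambda>l. \<Sum>j<m. B l j * x j) (\<lambda>l. \<Sum>j<m. B l j * x j) = bf m (\<lambda>j j'. \<Sum>l<k. cnj (B l j) * B l j') x x"
    using ip_adj[where m=k and A="\<lambda>j l. cnj (B l j)" and n=m and y=x and z=x]
    by (simp add: bf_def algebra_simps)
  show ?thesis using d 1 2 by simp
qed

lemma cadj_mult_entry:
  assumes "B \<in> carrier_mat k m" "j < m" "j' < m"
  shows "(cadj B * B) $$ (j, j') = (\<Sum>l<k. cnj (B $$ (l, j)) * B $$ (l, j'))"
  using assms by (simp add: cadj_def scalar_prod_def lessThan_atLeast0)

lemma cadj_mult_carrier: "B \<in> carrier_mat k m \<Longrightarrow> cadj B * B \<in> carrier_mat m m"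
  by (auto simp: cadj_def intro!: mult_carrier_mat)

lemma parity_op_carrier: "parity_op L \<in> carrier_mat (2^L) (2^L)"
  by (simp add: parity_op_def)

lemma part2:
  assumes P: "fpure (L + M) \<Psi>" "fptrace L M \<Psi> = \<rho>"
    and F: "fpure (L + K) \<Phi>" "fptrace L K \<Phi> = \<rho>"
  shows "\<exists>Ks. fchannel M K Ks \<and> apply_kraus (2^(L + K)) (id_par L M K Ks) \<Psi> = \<Phi>"
proof -
  define n :: nat where "n = 2^L"
  define m :: nat where "m = 2^M"
  define k :: nat where "k = 2^K"
  have k0: "0 < k" by (simp add: k_def)
  obtain v pv where v: "dim_vec v = 2^(L+M)" "\<Psi> = outer v" "\<forall>x<2^(L+M). v $ x \<noteq> 0 \<longrightarrow> even_occ x = pv"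
    using fpure_vec[OF P(1)] by blast
  obtain w pw where w: "dim_vec w = 2^(L+K)" "\<Phi> = outer w" "\<forall>x<2^(L+K). w $ x \<noteq> 0 \<longrightarrow> even_occ x = pw"
    using fpure_vec[OF F(1)] by blast
  have vd: "dim_vec v = n * m" using v(1) by (simp add: n_def m_def power_add)
  have wd: "dim_vec w = n * k" using w(1) by (simp add: n_def k_def power_add)
  define A where "A i j = (if i < n \<and> j < m then v $ (i * m + j) else 0)" for i j
  define C where "C i l = (if i < n \<and> l < k then w $ (i * k + l) else 0)" for i l
  have pA: "\<forall>i j. A i j \<noteq> 0 \<longrightarrow> (even_occ i = even_occ j) = pv"
  proof (intro allI impI)
    fix i j assume "A i j \<noteq> 0"
    then have ij: "i < n" "j < m" "v $ (i * m + j) \<noteq> 0" by (auto simp: A_def split: if_splits)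
    then have "even_occ (i * m + j) = pv" using v(3) idx_lt[OF ij(1,2)] vd v(1) by simp
    then show "(even_occ i = even_occ j) = pv" using even_occ_concat[of j M i] ij(2) by (simp add: m_def)
  qed
  have pC: "\<forall>i l. C i l \<noteq> 0 \<longrightarrow> (even_occ i = even_occ l) = pw"
  proof (intro allI impI)
    fix i l assume "C i l \<noteq> 0"
    then have il: "i < n" "l < k" "w $ (i * k + l) \<noteq> 0" by (auto simp: C_def split: if_splits)
    then have "even_occ (i * k + l) = pw" using w(3) idx_lt[OF il(1,2)] wd w(1) by simp
    then show "(even_occ i = even_occ l) = pw" using even_occ_concat[of l K i] il(2) by (simp add: k_def)
  qed
  have gram: "\<forall>i<n. \<forall>i'<n. (\<Sum>j<m. A i j * cnj (A i' j)) = (\<Sum>l<k. C i l * cnj (C i' l))"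
  proof (intro allI impI)
    fix i i' assume ii: "i < n" "i' < n"
    have "fptrace L M \<Psi> $$ (i, i') = fptrace L K \<Phi> $$ (i, i')" using P(2) F(2) by simp
    then have "(\<Sum>j<m. v $ (i * m + j) * cnj (v $ (i' * m + j))) = (\<Sum>l<k. w $ (i * k + l) * cnj (w $ (i' * k + l)))"
      unfolding v(2) w(2) using fptrace_outer[OF v(1)] fptrace_outer[OF w(1)] ii
      by (simp add: n_def m_def k_def)
    moreover have "(\<Sum>j<m. A i j * cnj (A i' j)) = (\<Sum>j<m. v $ (i * m + j) * cnj (v $ (i' * m + j)))"
      using ii by (intro sum.cong refl) (simp add: A_def)
    moreover have "(\<Sum>l<k. C i l * cnj (C i' l)) = (\<Sum>l<k. w $ (i * k + l) * cnj (w $ (i' * k + l)))"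
      using ii by (intro sum.cong refl) (simp add: C_def)
    ultimately show "(\<Sum>j<m. A i j * cnj (A i' j)) = (\<Sum>l<k. C i l * cnj (C i' l))" by simp
  qed
  obtain D where D1: "\<forall>i<n. \<forall>l<k. (\<Sum>j<m. D l j * A i j) = C i l"
    and D2: "\<forall>x. Re (ip k (\<lambda>l. \<Sum>j<m. D l j * x j) (\<lambda>l. \<Sum>j<m. D l j * x j)) \<le> Re (ip m x x)"
    and D3: "\<forall>l j. D l j \<noteq> 0 \<longrightarrow> (even_occ l = even_occ j) = (pv = pw)"
    using iso[OF gram pA pC] by blast
  define \<sigma> :: "nat \<Rightarrow> complex" where "\<sigma> j = (if even_occ j then 1 else -1)" for j
  define sv :: complex where "sv = (if pv then 1 else -1)"
  define Dm where "Dm l j = (if pv = pw then D l j else D l j * \<sigma> j)" for l j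
  define \<kappa> where "\<kappa> i = (if pv = pw then 1 else \<sigma> i * sv)" for i
  have \<kappa>1: "cnj (\<kappa> i) * \<kappa> i = 1" for i by (simp add: \<kappa>_def \<sigma>_def sv_def)
  have \<sigma>1: "cnj (\<sigma> j) * \<sigma> j = 1" for j by (simp add: \<sigma>_def)
  have Dm1: "(\<Sum>j<m. Dm l j * A i j) = \<kappa> i * C i l" if il: "i < n" "l < k" for i l
  proof (cases "pv = pw")
    case True then show ?thesis using D1 il by (simp add: Dm_def \<kappa>_def)
  next
    case False
    have "(\<Sum>j<m. Dm l j * A i j) = (\<Sum>j<m. \<sigma> i * sv * (D l j * A i j))"
    proof (intro sum.cong refl)
      fix j
      show "Dm l j * A i j = \<sigma> i * sv * (D l j * A i j)"
      proof (cases "A i j = 0")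
        case True then show ?thesis by simp
      next
        case nz: False
        then have "(even_occ i = even_occ j) = pv" using pA by blast
        then have "\<sigma> j = \<sigma> i * sv" by (auto simp: \<sigma>_def sv_def)
        then show ?thesis using False by (simp add: Dm_def)
      qed
    qed
    also have "\<dots> = \<sigma> i * sv * C i l" using D1 il by (simp add: sum_distrib_left[symmetric])
    finally show ?thesis using False by (simp add: \<kappa>_def)
  qed
  have Dm2: "Re (ip k (\<lambda>l. \<Sum>j<m. Dm l j * x j) (\<lambda>l. \<Sum>j<m. Dm l j * x j)) \<le> Re (ip m x x)" for x
  proof (cases "pv = pw")
    case True then show ?thesis using D2 by (simp add: Dm_def)
  next
    case False
    have "(\<lambda>l. \<Sum>j<m. Dm l j * x j) = (\<lambda>l. \<Sum>j<m. D l j * (\<sigma> j * x j))"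
      using False by (simp add: Dm_def mult.assoc)
    moreover have "ip m (\<lambda>j. \<sigma> j * x j) (\<lambda>j. \<sigma> j * x j) = ip m x x"
      unfolding ip_def by (intro sum.cong refl) (simp add: \<sigma>_def)
    ultimately show ?thesis using D2[rule_format, of "\<lambda>j. \<sigma> j * x j"] by simp
  qed
  have Dm3: "(even_occ l = even_occ j) = (pv = pw)" if "Dm l j \<noteq> 0" for l j
    using D3 that by (auto simp: Dm_def split: if_splits)
  define G where "G j j' = (if j = j' then 1 else 0) - (\<Sum>l<k. cnj (Dm l j) * Dm l j')" for j j'
  have bfG: "bf m G x x = ip m x x - ip k (\<lambda>l. \<Sum>j<m. Dm l j * x j) (\<lambda>l. \<Sum>j<m. Dm l j * x j)" for x
    unfolding G_def by (rule bf_IminusDD)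
  have qG: "qpsd m G"
    unfolding qpsd_def bfG using Dm2 ip_self_real by simp
  have bG: "bd even_occ m G"
    unfolding bd_def
  proof (intro allI impI)
    fix j j' assume jj: "j < m" "j' < m" "even_occ j \<noteq> even_occ j'"
    have "cnj (Dm l j) * Dm l j' = 0" for l
    proof (rule ccontr)
      assume "cnj (Dm l j) * Dm l j' \<noteq> 0"
      then have "Dm l j \<noteq> 0" "Dm l j' \<noteq> 0" by auto
      then show False using Dm3 jj(3) by blast
    qed
    then have "(\<Sum>l<k. cnj (Dm l j) * Dm l j') = 0" by (intro sum.neutral) blast
    moreover have "j \<noteq> j'" using jj(3) by auto
    ultimately show "G j j' = 0" by (simp add: G_def)
  qed
  obtain u' where u'1: "\<forall>j<m. \<forall>j'<m. G j j' = (\<Sum>t<m. u' t j * cnj (u' t j'))"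
    and U': "\<forall>t j. u' t j \<noteq> 0 \<longrightarrow> t \<le> j \<and> j < m \<and> even_occ j = even_occ t \<and> u' t t \<noteq> 0"
    using chol[OF qG bG] by blast
  have \<beta>0: "(\<Sum>j<m. cnj (u' t j) * A i j) = 0" if it: "i < n" "t < m" for i t
  proof -
    define a where "a j = A i j" for j
    have "ip k (\<lambda>l. \<Sum>j<m. Dm l j * a j) (\<lambda>l. \<Sum>j<m. Dm l j * a j) = (\<Sum>l<k. cnj (C i l) * C i l)"
      unfolding ip_def a_def
    proof (intro sum.cong refl)
      fix l assume "l \<in> {..<k}"
      then have "(\<Sum>j<m. Dm l j * A i j) = \<kappa> i * C i l" using Dm1 it by simp
      then show "cnj (\<Sum>j<m. Dm l j * A i j) * (\<Sum>j<m. Dm l j * A i j) = cnj (C i l) * C i l"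
        using \<kappa>1[of i] by (simp add: algebra_simps)
    qed
    also have "\<dots> = ip m a a"
      using gram it unfolding ip_def a_def by (simp add: mult.commute)
    finally have "bf m G a a = 0" unfolding bfG by simp
    moreover have "ip m (\<lambda>t. \<Sum>j<m. cnj (u' t j) * a j) (\<lambda>t. \<Sum>j<m. cnj (u' t j) * a j) = bf m G a a"
      unfolding ip_adj[where m=m and A="\<lambda>j t. u' t j" and n=m and y=a and z=a] bf_def
      using u'1 by (intro sum.cong refl) (simp add: algebra_simps)
    ultimately have "ip m (\<lambda>t. \<Sum>j<m. cnj (u' t j) * a j) (\<lambda>t. \<Sum>j<m. cnj (u' t j) * a j) = 0" by simp
    from ip_zero[OF this it(2)] show ?thesis by (simp add: a_def)
  qed
  define DM where "DM = mat k m (\<lambda>(l, j). Dm l j)"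
  define E where "E t = mat k m (\<lambda>(l, j). if l = 0 then cnj (u' t j) else 0)" for t
  define Ks where "Ks = DM # map E [0..<m]"
  have DMc: "DM \<in> carrier_mat k m" by (simp add: DM_def)
  have Ec: "E t \<in> carrier_mat k m" for t by (simp add: E_def)
  have Ksc: "\<forall>D\<in>set Ks. D \<in> carrier_mat k m" using DMc Ec by (auto simp: Ks_def)
  have eo0: "even_occ 0" by (rule even_occ_0)
  have par_DM: "even_kraus M K DM \<or> odd_kraus M K DM"
  proof (cases "pv = pw")
    case True
    then have "even_kraus M K DM" unfolding even_kraus_def using Dm3 by (auto simp: DM_def k_def m_def)
    then show ?thesis ..
  next
    case False
    then have "odd_kraus M K DM" unfolding odd_kraus_def using Dm3 by (auto simp: DM_def k_def m_def)
    then show ?thesis ..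
  qed
  have par_E: "even_kraus M K (E t) \<or> odd_kraus M K (E t)" for t
  proof (cases "even_occ t")
    case True
    then have "even_kraus M K (E t)" unfolding even_kraus_def using U' eo0 by (auto simp: E_def k_def m_def)
    then show ?thesis ..
  next
    case False
    then have "odd_kraus M K (E t)" unfolding odd_kraus_def using U' eo0 by (auto simp: E_def k_def m_def)
    then show ?thesis ..
  qed
  have fc: "fchannel M K Ks"
    unfolding fchannel_def
  proof
    show "\<forall>D\<in>set Ks. even_kraus M K D \<or> odd_kraus M K D" using par_DM par_E by (auto simp: Ks_def)
    have cc: "\<forall>D\<in>set Ks. cadj D * D \<in> carrier_mat m m" using Ksc cadj_mult_carrier by blast
    note fe = foldr_add_entry[OF cc]
    show "foldr (+) (map (\<lambda>D. cadj D * D) Ks) (0\<^sub>m (2^M) (2^M)) = 1\<^sub>m (2^M)"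
      unfolding m_def[symmetric]
    proof (rule eq_matI)
      fix j j' assume jj: "j < dim_row (1\<^sub>m m)" "j' < dim_col (1\<^sub>m m)"
      then have j: "j < m" "j' < m" by auto
      have e1: "(cadj DM * DM) $$ (j, j') = (\<Sum>l<k. cnj (Dm l j) * Dm l j')"
      proof -
        have "(cadj DM * DM) $$ (j, j') = (\<Sum>l<k. cnj (DM $$ (l, j)) * DM $$ (l, j'))"
          by (rule cadj_mult_entry[OF DMc j])
        also have "\<dots> = (\<Sum>l<k. cnj (Dm l j) * Dm l j')"
          using j by (intro sum.cong) (auto simp: DM_def)
        finally show ?thesis .
      qed
      have e2: "(cadj (E t) * E t) $$ (j, j') = u' t j * cnj (u' t j')" for t
      proof -
        have "(cadj (E t) * E t) $$ (j, j') = (\<Sum>l<k. cnj (E t $$ (l, j)) * E t $$ (l, j'))"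
          by (rule cadj_mult_entry[OF Ec j])
        also have "\<dots> = (\<Sum>l<k. if l = 0 then u' t j * cnj (u' t j') else 0)"
          using j by (intro sum.cong) (auto simp: E_def)
        also have "\<dots> = u' t j * cnj (u' t j')" using k0 by simp
        finally show ?thesis .
      qed
      have "foldr (+) (map (\<lambda>D. cadj D * D) Ks) (0\<^sub>m m m) $$ (j, j')
          = (\<Sum>D\<leftarrow>Ks. (cadj D * D) $$ (j, j'))" using fe j by blast
      also have "\<dots> = (\<Sum>l<k. cnj (Dm l j) * Dm l j') + (\<Sum>t\<leftarrow>[0..<m]. u' t j * cnj (u' t j'))"
        by (simp add: Ks_def e1 e2 comp_def)
      also have "(\<Sum>t\<leftarrow>[0..<m]. u' t j * cnj (u' t j')) = (\<Sum>t<m. u' t j * cnj (u' t j'))"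
        by (simp add: interv_sum_list_conv_sum_set_nat lessThan_atLeast0)
      also have "\<dots> = G j j'" using u'1 j by simp
      also have "(\<Sum>l<k. cnj (Dm l j) * Dm l j') + G j j' = 1\<^sub>m m $$ (j, j')"
        using j by (simp add: G_def)
      finally show "foldr (+) (map (\<lambda>D. cadj D * D) Ks) (0\<^sub>m m m) $$ (j, j') = 1\<^sub>m m $$ (j, j')" .
    next
      show "dim_row (foldr (+) (map (\<lambda>D. cadj D * D) Ks) (0\<^sub>m m m)) = dim_row (1\<^sub>m m)"
        using fe by auto
      show "dim_col (foldr (+) (map (\<lambda>D. cadj D * D) Ks) (0\<^sub>m m m)) = dim_col (1\<^sub>m m)"
        using fe by auto
    qed
  qed
  define Xs where "Xs D = (if even_kraus M K D then 1\<^sub>m n else parity_op L)" for D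
  have Xsc: "Xs D \<in> carrier_mat n n" for D
    using parity_op_carrier by (simp add: Xs_def n_def)
  have Xsd: "\<forall>i<n. \<forall>i'<n. i \<noteq> i' \<longrightarrow> Xs D $$ (i, i') = 0" for D
    by (simp add: Xs_def parity_op_def n_def)
  have ip_eq: "id_par L M K Ks = map (\<lambda>D. kron (Xs D) D) Ks"
    by (simp add: id_par_def Xs_def n_def)
  have Wc: "kron (Xs D) D \<in> carrier_mat (n * k) (n * m)" if "D \<in> set Ks" for D
  proof -
    have "D \<in> carrier_mat k m" using Ksc that by blast
    then show ?thesis using Xsc[of D] by (simp add: kron_def)
  qed
  have Wv: "(kron (Xs D) D *\<^sub>v v) $ x = Xs D $$ (x div k, x div k) * (\<Sum>j<m. D $$ (x mod k, j) * A (x div k) j)"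
    if "D \<in> set Ks" "x < n * k" for D x
  proof -
    have xd: "x div k < n" using that(2) by (simp add: less_mult_imp_div_less)
    have "(kron (Xs D) D *\<^sub>v v) $ x = Xs D $$ (x div k, x div k) * (\<Sum>j<m. D $$ (x mod k, j) * v $ (x div k * m + j))"
      using kron_mult_vec[OF Xsc Xsd _ vd that(2)] Ksc that(1) by blast
    also have "(\<Sum>j<m. D $$ (x mod k, j) * v $ (x div k * m + j)) = (\<Sum>j<m. D $$ (x mod k, j) * A (x div k) j)"
      using xd by (intro sum.cong refl) (simp add: A_def)
    finally show ?thesis .
  qed
  define c0 :: complex where "c0 = (if pv = pw then 1 else sv)"
  have c01: "c0 * cnj c0 = 1" by (simp add: c0_def sv_def)
  have WDM: "(kron (Xs DM) DM *\<^sub>v v) $ x = c0 * w $ x" if x: "x < n * k" for x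
  proof -
    define i where "i = x div k"
    define l where "l = x mod k"
    have i: "i < n" using x by (simp add: i_def less_mult_imp_div_less)
    have l: "l < k" using k0 by (simp add: l_def)
    have xe: "x = i * k + l" by (simp add: i_def l_def)
    have wx: "w $ x = C i l" using i l xe by (simp add: C_def)
    have "(kron (Xs DM) DM *\<^sub>v v) $ x = Xs DM $$ (i, i) * (\<Sum>j<m. DM $$ (l, j) * A i j)"
      using Wv[of DM x] x by (simp add: Ks_def i_def l_def)
    also have "\<dots> = Xs DM $$ (i, i) * (\<Sum>j<m. Dm l j * A i j)"
      using l by (auto simp: DM_def intro!: sum.cong)
    also have "\<dots> = Xs DM $$ (i, i) * \<kappa> i * C i l" using Dm1[OF i l] by simp
    also have "\<dots> = c0 * C i l"
    proof (cases "pv = pw")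
      case True
      then have "even_kraus M K DM" unfolding even_kraus_def using Dm3 by (auto simp: DM_def k_def m_def)
      then show ?thesis using True i by (simp add: Xs_def \<kappa>_def c0_def)
    next
      case False
      show ?thesis
      proof (cases "even_kraus M K DM")
        case ek: True
        have ok: "odd_kraus M K DM" using False unfolding odd_kraus_def using Dm3 by (auto simp: DM_def k_def m_def)
        have "Dm l j = 0" if "j < m" for j
        proof -
          have "DM $$ (l, j) = 0" using ek ok l that unfolding even_kraus_def odd_kraus_def k_def m_def
            by (cases "even_occ l = even_occ j") auto
          then show ?thesis using l that by (simp add: DM_def)
        qed
        then have "\<kappa> i * C i l = 0" using Dm1[OF i l] by simp
        moreover have "\<kappa> i \<noteq> 0" using \<kappa>1[of i] by auto
        ultimately show ?thesis by simp
      next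
        case nek: False
        then show ?thesis using False i
          by (simp add: Xs_def \<kappa>_def c0_def parity_op_def n_def \<sigma>_def sv_def)
      qed
    qed
    finally show ?thesis using wx by simp
  qed
  have WE: "(kron (Xs (E t)) (E t) *\<^sub>v v) $ x = 0" if t: "t < m" and x: "x < n * k" for t x
  proof -
    have Et: "E t \<in> set Ks" using t by (simp add: Ks_def)
    have i: "x div k < n" using x by (simp add: less_mult_imp_div_less)
    have l: "x mod k < k" using k0 by simp
    have "(\<Sum>j<m. E t $$ (x mod k, j) * A (x div k) j) = (if x mod k = 0 then (\<Sum>j<m. cnj (u' t j) * A (x div k) j) else 0)"
      using l by (auto simp: E_def intro!: sum.cong)
    also have "\<dots> = 0" using \<beta>0[OF i t] by simp
    finally show ?thesis using Wv[OF Et x] by simp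
  qed
  have ak: "apply_kraus (2^(L + K)) (id_par L M K Ks) \<Psi> = \<Phi>"
  proof -
    have NK: "(2::nat)^(L + K) = n * k" by (simp add: n_def k_def power_add)
    have terms: "\<forall>D\<in>set Ks. kron (Xs D) D * \<Psi> * cadj (kron (Xs D) D) = outer (kron (Xs D) D *\<^sub>v v)"
      unfolding v(2) using outer_mult[OF Wc vd] by blast
    have tc: "\<forall>D\<in>set Ks. outer (kron (Xs D) D *\<^sub>v v) \<in> carrier_mat (n * k) (n * k)"
    proof
      fix D assume D: "D \<in> set Ks"
      have "dim_row (kron (Xs D) D) = n * k" using carrier_matD(1)[OF Wc[OF D]] .
      then have "dim_vec (kron (Xs D) D *\<^sub>v v) = n * k" by simp
      then show "outer (kron (Xs D) D *\<^sub>v v) \<in> carrier_mat (n * k) (n * k)" by (simp add: outer_def)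
    qed
    have "apply_kraus (2^(L + K)) (id_par L M K Ks) \<Psi> = foldr (+) (map (\<lambda>D. outer (kron (Xs D) D *\<^sub>v v)) Ks) (0\<^sub>m (n * k) (n * k))"
    proof -
      have eq: "map (\<lambda>D. kron (Xs D) D * \<Psi> * cadj (kron (Xs D) D)) Ks = map (\<lambda>D. outer (kron (Xs D) D *\<^sub>v v)) Ks"
        using terms by (intro map_cong) auto
      show ?thesis unfolding apply_kraus_def ip_eq NK map_map comp_def eq ..
    qed
    also have "\<dots> = outer w"
    proof (rule eq_matI)
      note fe = foldr_add_entry[OF tc]
      fix x y assume xy: "x < dim_row (outer w)" "y < dim_col (outer w)"
      then have x: "x < n * k" and y: "y < n * k" using wd by (auto simp: outer_def)
      have "foldr (+) (map (\<lambda>D. outer (kron (Xs D) D *\<^sub>v v)) Ks) (0\<^sub>m (n * k) (n * k)) $$ (x, y)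
          = (\<Sum>D\<leftarrow>Ks. outer (kron (Xs D) D *\<^sub>v v) $$ (x, y))" using fe x y by blast
      also have "\<dots> = outer (kron (Xs DM) DM *\<^sub>v v) $$ (x, y) + (\<Sum>t\<leftarrow>[0..<m]. outer (kron (Xs (E t)) (E t) *\<^sub>v v) $$ (x, y))"
        by (simp add: Ks_def comp_def)
      also have "(\<Sum>t\<leftarrow>[0..<m]. outer (kron (Xs (E t)) (E t) *\<^sub>v v) $$ (x, y)) = (\<Sum>t\<leftarrow>[0..<m]. 0)"
      proof (intro arg_cong[where f=sum_list] map_cong refl)
        fix t assume "t \<in> set [0..<m]"
        then have t: "t < m" by simp
        have Et: "E t \<in> set Ks" using t by (simp add: Ks_def)
        show "outer (kron (Xs (E t)) (E t) *\<^sub>v v) $$ (x, y) = 0"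
          using Wc[OF Et] x y WE[OF t x] by (simp add: outer_def)
      qed
      also have "outer (kron (Xs DM) DM *\<^sub>v v) $$ (x, y) = c0 * cnj c0 * (w $ x * cnj (w $ y))"
        using Wc[of DM] x y WDM[OF x] WDM[OF y] by (simp add: Ks_def outer_def algebra_simps)
      also have "\<dots> = outer w $$ (x, y)" using c01 x y wd by (simp add: outer_def)
      finally show "foldr (+) (map (\<lambda>D. outer (kron (Xs D) D *\<^sub>v v)) Ks) (0\<^sub>m (n * k) (n * k)) $$ (x, y) = outer w $$ (x, y)"
        by simp
    next
      note fe = foldr_add_entry[OF tc]
      show "dim_row (foldr (+) (map (\<lambda>D. outer (kron (Xs D) D *\<^sub>v v)) Ks) (0\<^sub>m (n * k) (n * k))) = dim_row (outer w)"
        using fe wd by (auto simp: outer_def)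
      show "dim_col (foldr (+) (map (\<lambda>D. outer (kron (Xs D) D *\<^sub>v v)) Ks) (0\<^sub>m (n * k) (n * k))) = dim_col (outer w)"
        using fe wd by (auto simp: outer_def)
    qed
    finally show ?thesis using w(2) by simp
  qed
  show ?thesis using fc ak by blast
qed

lemma psd_outer: assumes d: "dim_vec v = N" shows "psd N (outer v)"
proof -
  show "psd N (outer v)"
    unfolding psd_def Let_def
  proof (intro conjI allI impI)
    show "outer v \<in> carrier_mat N N" using d by (simp add: outer_def)
    fix y :: "complex vec" assume dy: "dim_vec y = N"
    define c where "c = (\<Sum>z<N. cnj (v $ z) * y $ z)"
    have Oc: "outer v \<in> carrier_mat N N" using d by (simp add: outer_def)
    have "(outer v *\<^sub>v y) $ x = v $ x * c" if "x < N" for x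
      unfolding mult_mat_vec_entry[OF Oc dy that] c_def sum_distrib_left
      using that d by (intro sum.cong refl) (simp add: outer_def algebra_simps)
    then have "(\<Sum>i<N. cnj (y $ i) * (outer v *\<^sub>v y) $ i) = (\<Sum>i<N. cnj (y $ i) * v $ i) * c"
      by (simp add: sum_distrib_right sum_distrib_left algebra_simps)
    also have "(\<Sum>i<N. cnj (y $ i) * v $ i) = cnj c" by (simp add: c_def cnj_sum mult.commute)
    finally have e: "(\<Sum>i<N. cnj (y $ i) * (outer v *\<^sub>v y) $ i) = cnj c * c" .
    show "Im (\<Sum>i<N. cnj (y $ i) * (outer v *\<^sub>v y) $ i) = 0" unfolding e by simp
    show "0 \<le> Re (\<Sum>i<N. cnj (y $ i) * (outer v *\<^sub>v y) $ i)" unfolding e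
      by (simp add: mult.commute[of "cnj c"] complex_mult_cnj)
  qed
qed

lemma psd_zero: "psd N (0\<^sub>m N N)"
  unfolding psd_def Let_def by (auto simp: scalar_prod_def)

lemma part1:
  assumes R: "fstate L \<rho>" "\<rho> \<noteq> 0\<^sub>m (2^L) (2^L)"
  shows "\<exists>M \<Psi>. fpure (L + M) \<Psi> \<and> fptrace L M \<Psi> = \<rho>"
proof -
  define n :: nat where "n = 2^L"
  have n0: "0 < n" by (simp add: n_def)
  have Rc: "\<rho> \<in> carrier_mat n n" using fstate_props(3)[OF R(1)] by (simp add: n_def)
  obtain u where u1: "\<forall>i<n. \<forall>j<n. \<rho> $$ (i, j) = (\<Sum>s<n. u s i * cnj (u s j))"
    and U: "\<forall>s i. u s i \<noteq> 0 \<longrightarrow> s \<le> i \<and> i < n \<and> even_occ i = even_occ s \<and> u s s \<noteq> 0"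
    using chol[OF fstate_props(1,2)[OF R(1)]] unfolding n_def by blast
  define v where "v = vec (n * n) (\<lambda>x. u (x mod n) (x div n))"
  have vd: "dim_vec v = 2^(L + L)" by (simp add: v_def n_def power_add)
  have vi: "v $ (i * n + s) = u s i" if "i < n" "s < n" for i s
    using that idx_lt[OF that] by (simp add: v_def)
  define \<Psi> where "\<Psi> = outer v"
  have tr: "fptrace L L \<Psi> = \<rho>"
  proof (rule eq_matI)
    fix i i' assume "i < dim_row \<rho>" "i' < dim_col \<rho>"
    then have ii: "i < n" "i' < n" using Rc by auto
    have "fptrace L L \<Psi> $$ (i, i') = (\<Sum>s<n. v $ (i * n + s) * cnj (v $ (i' * n + s)))"
      unfolding \<Psi>_def using fptrace_outer[OF vd] ii by (simp add: n_def)
    also have "\<dots> = (\<Sum>s<n. u s i * cnj (u s i'))" using ii vi by simp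
    also have "\<dots> = \<rho> $$ (i, i')" using u1 ii by simp
    finally show "fptrace L L \<Psi> $$ (i, i') = \<rho> $$ (i, i')" .
  next
    show "dim_row (fptrace L L \<Psi>) = dim_row \<rho>" using Rc by (simp add: fptrace_def n_def)
    show "dim_col (fptrace L L \<Psi>) = dim_col \<rho>" using Rc by (simp add: fptrace_def n_def)
  qed
  have Pc: "\<Psi> \<in> carrier_mat (2^(L+L)) (2^(L+L))" using vd by (simp add: \<Psi>_def outer_def)
  have veo: "even_occ x" if "x < n * n" "v $ x \<noteq> 0" for x
  proof -
    have "u (x mod n) (x div n) \<noteq> 0" using that by (simp add: v_def)
    then have "even_occ (x div n) = even_occ (x mod n)" using U by blast
    moreover have "x = x div n * 2^L + x mod n" using div_mult_mod_eq[of x n] by (simp add: n_def)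
    moreover have "x mod n < 2^L" using n0 by (simp add: n_def)
    ultimately show ?thesis using even_occ_concat[of "x mod n" L "x div n"] by simp
  qed
  have supp: "supported_on (2^(L+L)) True \<Psi>"
    unfolding supported_on_def
  proof (intro allI impI)
    fix x z assume xz: "x < 2^(L+L)" "z < 2^(L+L)" "even_occ x \<noteq> True \<or> even_occ z \<noteq> True"
    then have xz': "x < n * n" "z < n * n" by (simp_all add: n_def power_add)
    then have "v $ x = 0 \<or> v $ z = 0" using veo xz(3) by blast
    then show "\<Psi> $$ (x, z) = 0" using xz vd by (auto simp: \<Psi>_def outer_def)
  qed
  have trace: "Re (\<Sum>x<2^(L+L). \<Psi> $$ (x, x)) \<le> 1"
  proof -
    have "(\<Sum>x<2^(L+L). \<Psi> $$ (x, x)) = (\<Sum>x<n * n. v $ x * cnj (v $ x))"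
      using vd by (intro sum.cong) (auto simp: \<Psi>_def outer_def n_def power_add)
    also have "\<dots> = (\<Sum>i<n. \<Sum>s<n. v $ (i * n + s) * cnj (v $ (i * n + s)))" by (rule sum_reindex)
    also have "\<dots> = (\<Sum>i<n. \<rho> $$ (i, i))" using vi u1 by simp
    finally show ?thesis using R(1) by (simp add: fstate_def n_def)
  qed
  have v0: "v \<noteq> 0\<^sub>v (2^(L+L))"
  proof
    assume v00: "v = 0\<^sub>v (2^(L+L))"
    have uz: "u s i = 0" if "i < n" "s < n" for i s
    proof -
      have "i * n + s < 2^(L+L)" using idx_lt[OF that] by (simp add: n_def power_add)
      then show ?thesis using vi[OF that] v00 by simp
    qed
    have "\<rho> = 0\<^sub>m n n"
      by (rule eq_matI) (use Rc u1 uz in auto)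
    then show False using R(2) by (simp add: n_def)
  qed
  have "fpure (L + L) \<Psi>"
    unfolding fpure_def fstate_def
  proof (intro conjI exI)
    show "\<Psi> \<in> carrier_mat (2^(L+L)) (2^(L+L))" by (rule Pc)
    show "\<Psi> = \<Psi> + 0\<^sub>m (2^(L+L)) (2^(L+L))" using Pc by simp
    show "psd (2^(L+L)) \<Psi>" unfolding \<Psi>_def by (rule psd_outer[OF vd])
    show "psd (2^(L+L)) (0\<^sub>m (2^(L+L)) (2^(L+L)))" by (rule psd_zero)
    show "supported_on (2^(L+L)) True \<Psi>" by (rule supp)
    show "supported_on (2^(L+L)) False (0\<^sub>m (2^(L+L)) (2^(L+L)))" by (simp add: supported_on_def)
    show "Re (\<Sum>i<2^(L+L). \<Psi> $$ (i, i)) \<le> 1" by (rule trace)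
    show "dim_vec v = 2^(L+L)" by (rule vd)
    show "v \<noteq> 0\<^sub>v (2^(L+L))" by (rule v0)
    show "\<Psi> = outer v" by (simp add: \<Psi>_def)
  qed
  then show ?thesis using tr by blast
qed

theorem proposition2:
  fixes L :: nat and \<rho> :: "complex mat"
  assumes "fstate L \<rho>"
  shows "(\<rho> \<noteq> 0\<^sub>m (2^L) (2^L) \<longrightarrow> (\<exists>M \<Psi>. fpure (L + M) \<Psi> \<and> fptrace L M \<Psi> = \<rho>))
    \<and> (\<forall>M K \<Psi> \<Phi>. fpure (L + M) \<Psi> \<and> fptrace L M \<Psi> = \<rho> \<and>
                   fpure (L + K) \<Phi> \<and> fptrace L K \<Phi> = \<rho> \<longrightarrow>
          (\<exists>Ks. fchannel M K Ks \<and> apply_kraus (2^(L + K)) (id_par L M K Ks) \<Psi> = \<Phi>))"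
  using part1[OF assms] part2 by blast

end
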